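(* Let $P,Q$ be Bio$\beta$ systems and $S,T$ Bio$\beta$ membranes with $P\equiv Q$ and $S\equiv T$. Then for all $\Gamma_1,\Gamma_2,\tau$: $\Gamma_1;\Gamma_2\vdash P:\tau$ if and only if $\Gamma_1;\Gamma_2\vdash Q:\tau$; and for all $\Delta_1,\Delta_2,\sigma$: $\Delta_1;\Delta_2\vdash S:\sigma$ if and only if $\Delta_1;\Delta_2\vdash T:\sigma$.
   Context: Bio$\beta$ syntax. Fix a protein signature: a finite set $\mathcal P=\mathcal P_p\cup\mathcal P_{ap}$ of protein names, partitioned into polar proteins $\mathcal P_p$ and apolar proteins $\mathcal P_{ap}$, with $s:\mathcal P\to\mathbb N$ giving the number of sites of each protein; fix a countably infinite set $\mathcal N$ of names. An interface is a finite map $\rho$ from sites (natural numbers) to $\mathcal N\cup\{h,v\}$ (visible $v$, hidden $h$, or tied to a name), written as a sum, e.g. $\rho=1+\bar2+3^x$ means $\rho(1)=v,\rho(2)=h,\rho(3)=x$. Let $fn(\rho)=\mathrm{im}(\rho)\cap\mathcal N$ and $|\rho,x|=|\{i:\rho(i)=x\}|$. Systems and membranes: $P::=\diamond\mid A_p(\rho)\mid [S]\{P\}\mid P*Q\mid \nu n.P\mid \mathsf p_n;P\mid \mathsf f_n;[S]\{P\}$ ($A_p\in\mathcal P_p$), $S::=\mathbf 0\mid A_{ap}(\rho)\mid S\star T\mid \mathsf p^\perp_n;S\mid \mathsf f^\perp_n$ ($A_{ap}\in\mathcal P_{ap}$), with $[S]\{P\}$ a compartment with membrane $S$ enclosing $P$,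 $\nu n$ a binder, and $\mathsf p_n,\mathsf p^\perp_n,\mathsf f_n,\mathsf f^\perp_n$ pinch/co-pinch/fuse/co-fuse actions. $fn(\cdot)$ is as usual (including subscripts of actions). $\mathrm{Act}=\{\mathsf p_n,\mathsf p^\perp_n,\mathsf f_n,\mathsf f^\perp_n\mid n\in\mathcal N\}$ with involution $(t_n)^\perp=t^\perp_n$, extended to sets pointwise; for $X\subseteq\mathcal N$, $\tau\restriction X=\{t_x\in\tau\mid x\in X\}$. $act(K)$, the set of actions occurring in $K$, is defined by: $\emptyset$ for $\diamond,\mathbf 0$, proteins; union over compartments and compositions; $act(\nu n.P)=act(P)$; $act(t_n;K)=\{t_n\}\cup act(K)$; $act(\mathsf f^\perp_n)=\{\mathsf f^\perp_n\}$. Structural equivalence $\equiv$ is the least equivalence containing $\alpha$-equivalence such that: $*$ and $\star$ are commutative and associative with units $\diamond$ and $\mathbf 0$; $\nu n.\nu m.P\equiv\nu m.\nu n.P$ ($n\ne m$); $\nu n.\diamond\equiv\diamond$; $\nu n.(P*Q)\equiv(\nu n.P)*Q$ if $n\notin fn(Q)$; $\nu n.[S]\{P\}\equiv[S]\{\nu n.P\}$ if $n\notin fn(S)$; $\nu n.(t_m;P)\equiv t_m;\nu n.P$ for $t\in\{\mathsf p,\mathsf f\}$, $n\neq m$; and $\equiv$ is preserved by $*$, $\star$, compartment formation, and prefixes $t_n;-$ for $t\in\{\mathsf p,\mathsf p^\perp,\mathsf f\}$. Type system. A type $\tau$ is a finite subset of $\mathrm{Act}$. Judgements have the form $\Gamma_1;\Gamma_2\vdash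 K:\tau$ with $\Gamma_1,\Gamma_2$ disjoint finite sets of names (a comma denotes disjoint union). Let $ok_e(\Gamma_1,\Gamma_2,\Delta_1,\Delta_2)$ iff $(\Gamma_1\cup\Gamma_2)\cap(\Delta_1\cup\Delta_2)=\emptyset$, and $ok_t(\Gamma,\tau,\sigma)$ iff $(\tau\restriction\Gamma)^\perp=\sigma\restriction\Gamma$. Rules: (empty) $\emptyset;\emptyset\vdash\diamond:\emptyset$ and $\emptyset;\emptyset\vdash\mathbf 0:\emptyset$. (prot) if $|\rho,x|\le2$ for all $x\in fn(\rho)$, then $\{x:|\rho,x|=1\};\{x:|\rho,x|=2\}\vdash A(\rho):\emptyset$. (action) for $t\in\{\mathsf p,\mathsf p^\perp,\mathsf f\}$, if $\Gamma_1;\Gamma_2\vdash K:\emptyset$ and $act(K)=\emptyset$ then $\Gamma_1,x;\Gamma_2\vdash t_x;K:\{t_x\}$. (co-f) $x;\emptyset\vdash\mathsf f^\perp_x:\{\mathsf f^\perp_x\}$. ($\nu$-prot) if $\Gamma_1;\Gamma_2\vdash P:\tau$, $x\notin\Gamma_1$, $\tau\restriction\{x\}=\emptyset$, then $\Gamma_1;\Gamma_2\setminus\{x\}\vdash\nu x.P:\tau$. ($\nu$-action) for $t\in\{\mathsf p,\mathsf f\}$, if $\Gamma_1;\Gamma_2,x\vdash P:\tau\cup\{t_x,t_x^\perp\}$ and $\{t_x,t^\perp_x\}\cap\tau=\emptyset$ then $\Gamma_1;\Gamma_2\vdash\nu x.P:\tau$. (par) for $op\in\{*,\star\}$, if $\Gamma_1,\Gamma;\Gamma_2\vdash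 K:\tau$, $\Delta_1,\Gamma;\Delta_2\vdash L:\sigma$, $ok_e(\Gamma_1,\Gamma_2,\Delta_1,\Delta_2)$ and $ok_t(\Gamma,\tau,\sigma)$, then $\Gamma_1,\Delta_1;\Gamma_2,\Delta_2,\Gamma\vdash K\,op\,L:\tau\cup\sigma$. (cell) if $\Gamma_1,\Gamma;\Gamma_2\vdash S:\tau$, $\Gamma;\Delta_2\vdash P:\sigma$, $ok_e(\Gamma_1,\Gamma_2,\emptyset,\Delta_2)$ and $ok_t(\Gamma,\tau,\sigma)$, then $\Gamma_1;\Gamma_2,\Delta_2,\Gamma\vdash[S]\{P\}:\tau\cup\sigma$. *)

theory Defs
  imports Main "HOL-Library.Finite_Map"
begin

(* Names: the countably infinite set N is rendered as nat.
   Sites are natural numbers. *)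
type_synonym name = nat

(* values of an interface: visible v, hidden h, or tied to a name *)
datatype ival = Vis | Hid | Nm name

type_synonym iface = "(nat, ival) fmap"

(* Polar protein names have type 'pp, apolar protein names type 'ap:
   the partition P = P_p \<union> P_ap is given by the two types. *)

datatype 'ap mem =
    MNil
  | MProt 'ap iface
  | MPar "'ap mem" "'ap mem"
  | CoPinch name "'ap mem"        (* p^perp_n ; S *)
  | CoFuse name                   (* f^perp_n *)

datatype ('pp, 'ap) sys =
    SNil
  | SProt 'pp iface
  | Cell "'ap mem" "('pp, 'ap) sys"       (* [S]{P} *)
  | SPar "('pp, 'ap) sys" "('pp, 'ap) sys"
  | Nu name "('pp, 'ap) sys"
  | Pinch name "('pp, 'ap) sys"           (* p_n ; P *)
  | Fuse name "'ap mem" "('pp, 'ap) sys"  (* f_n ; [S]{P} *)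

datatype act = Ap name | Apc name | Af name | Afc name
  (* p_n, p^perp_n, f_n, f^perp_n *)

fun actname :: "act \<Rightarrow> name" where
  "actname (Ap n) = n" | "actname (Apc n) = n"
| "actname (Af n) = n" | "actname (Afc n) = n"

fun dual :: "act \<Rightarrow> act" where
  "dual (Ap n) = Apc n" | "dual (Apc n) = Ap n"
| "dual (Af n) = Afc n" | "dual (Afc n) = Af n"

definition dualset :: "act set \<Rightarrow> act set" where
  "dualset \<tau> = dual ` \<tau>"

definition restr :: "act set \<Rightarrow> name set \<Rightarrow> act set" where
  "restr \<tau> X = {a \<in> \<tau>. actname a \<in> X}"

definition fn_if :: "iface \<Rightarrow> name set" where
  "fn_if \<rho> = {x. \<exists>i. fmlookup \<rho> i = Some (Nm x)}"

definition cnt :: "iface \<Rightarrow> name \<Rightarrow> nat" where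
  "cnt \<rho> x = card {i. fmlookup \<rho> i = Some (Nm x)}"

fun fnM :: "'ap mem \<Rightarrow> name set" where
  "fnM MNil = {}"
| "fnM (MProt A \<rho>) = fn_if \<rho>"
| "fnM (MPar S T) = fnM S \<union> fnM T"
| "fnM (CoPinch n S) = insert n (fnM S)"
| "fnM (CoFuse n) = {n}"

fun fnS :: "('pp, 'ap) sys \<Rightarrow> name set" where
  "fnS SNil = {}"
| "fnS (SProt A \<rho>) = fn_if \<rho>"
| "fnS (Cell S P) = fnM S \<union> fnS P"
| "fnS (SPar P Q) = fnS P \<union> fnS Q"
| "fnS (Nu n P) = fnS P - {n}"
| "fnS (Pinch n P) = insert n (fnS P)"
| "fnS (Fuse n S P) = insert n (fnM S \<union> fnS P)"

fun actM :: "'ap mem \<Rightarrow> act set" where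
  "actM MNil = {}"
| "actM (MProt A \<rho>) = {}"
| "actM (MPar S T) = actM S \<union> actM T"
| "actM (CoPinch n S) = insert (Apc n) (actM S)"
| "actM (CoFuse n) = {Afc n}"

fun actS :: "('pp, 'ap) sys \<Rightarrow> act set" where
  "actS SNil = {}"
| "actS (SProt A \<rho>) = {}"
| "actS (Cell S P) = actM S \<union> actS P"
| "actS (SPar P Q) = actS P \<union> actS Q"
| "actS (Nu n P) = actS P"
| "actS (Pinch n P) = insert (Ap n) (actS P)"
| "actS (Fuse n S P) = insert (Af n) (actM S \<union> actS P)"

definition swapN :: "name \<Rightarrow> name \<Rightarrow> name \<Rightarrow> name" where
  "swapN a b n = (if n = a then b else if n = b then a else n)"

fun swapV :: "name \<Rightarrow> name \<Rightarrow> ival \<Rightarrow> ival" where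
  "swapV a b Vis = Vis" | "swapV a b Hid = Hid"
| "swapV a b (Nm n) = Nm (swapN a b n)"

definition swapI :: "name \<Rightarrow> name \<Rightarrow> iface \<Rightarrow> iface" where
  "swapI a b \<rho> = fmmap (swapV a b) \<rho>"

fun swapM :: "name \<Rightarrow> name \<Rightarrow> 'ap mem \<Rightarrow> 'ap mem" where
  "swapM a b MNil = MNil"
| "swapM a b (MProt A \<rho>) = MProt A (swapI a b \<rho>)"
| "swapM a b (MPar S T) = MPar (swapM a b S) (swapM a b T)"
| "swapM a b (CoPinch n S) = CoPinch (swapN a b n) (swapM a b S)"
| "swapM a b (CoFuse n) = CoFuse (swapN a b n)"

fun swapS :: "name \<Rightarrow> name \<Rightarrow> ('pp, 'ap) sys \<Rightarrow> ('pp, 'ap) sys" where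
  "swapS a b SNil = SNil"
| "swapS a b (SProt A \<rho>) = SProt A (swapI a b \<rho>)"
| "swapS a b (Cell S P) = Cell (swapM a b S) (swapS a b P)"
| "swapS a b (SPar P Q) = SPar (swapS a b P) (swapS a b Q)"
| "swapS a b (Nu n P) = Nu (swapN a b n) (swapS a b P)"
| "swapS a b (Pinch n P) = Pinch (swapN a b n) (swapS a b P)"
| "swapS a b (Fuse n S P) = Fuse (swapN a b n) (swapM a b S) (swapS a b P)"

(* alpha-equivalence on systems (membranes contain no binders, so alpha-equivalence
   on membranes is syntactic equality) *)
inductive alphaS :: "('pp, 'ap) sys \<Rightarrow> ('pp, 'ap) sys \<Rightarrow> bool" where
  a_nil: "alphaS SNil SNil"
| a_prot: "alphaS (SProt A \<rho>) (SProt A \<rho>)"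
| a_cell: "alphaS P Q \<Longrightarrow> alphaS (Cell S P) (Cell S Q)"
| a_par: "alphaS P P' \<Longrightarrow> alphaS Q Q' \<Longrightarrow> alphaS (SPar P Q) (SPar P' Q')"
| a_nu: "z \<notin> fnS (Nu x P) \<Longrightarrow> z \<notin> fnS (Nu y Q) \<Longrightarrow>
         alphaS (swapS x z P) (swapS y z Q) \<Longrightarrow> alphaS (Nu x P) (Nu y Q)"
| a_pinch: "alphaS P Q \<Longrightarrow> alphaS (Pinch n P) (Pinch n Q)"
| a_fuse: "alphaS P Q \<Longrightarrow> alphaS (Fuse n S P) (Fuse n S Q)"

inductive eqM :: "'ap mem \<Rightarrow> 'ap mem \<Rightarrow> bool" where
  m_refl: "eqM S S"
| m_sym: "eqM S T \<Longrightarrow> eqM T S"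
| m_trans: "eqM S T \<Longrightarrow> eqM T U \<Longrightarrow> eqM S U"
| m_comm: "eqM (MPar S T) (MPar T S)"
| m_assoc: "eqM (MPar (MPar S T) U) (MPar S (MPar T U))"
| m_unit: "eqM (MPar S MNil) S"
| m_par: "eqM S S' \<Longrightarrow> eqM T T' \<Longrightarrow> eqM (MPar S T) (MPar S' T')"
| m_copinch: "eqM S T \<Longrightarrow> eqM (CoPinch n S) (CoPinch n T)"

inductive eqS :: "('pp, 'ap) sys \<Rightarrow> ('pp, 'ap) sys \<Rightarrow> bool" where
  s_alpha: "alphaS P Q \<Longrightarrow> eqS P Q"
| s_refl: "eqS P P"
| s_sym: "eqS P Q \<Longrightarrow> eqS Q P"
| s_trans: "eqS P Q \<Longrightarrow> eqS Q R \<Longrightarrow> eqS P R"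
| s_comm: "eqS (SPar P Q) (SPar Q P)"
| s_assoc: "eqS (SPar (SPar P Q) R) (SPar P (SPar Q R))"
| s_unit: "eqS (SPar P SNil) P"
| s_nunu: "n \<noteq> m \<Longrightarrow> eqS (Nu n (Nu m P)) (Nu m (Nu n P))"
| s_nunil: "eqS (Nu n SNil) SNil"
| s_nupar: "n \<notin> fnS Q \<Longrightarrow> eqS (Nu n (SPar P Q)) (SPar (Nu n P) Q)"
| s_nucell: "n \<notin> fnM S \<Longrightarrow> eqS (Nu n (Cell S P)) (Cell S (Nu n P))"
| s_nupinch: "n \<noteq> m \<Longrightarrow> eqS (Nu n (Pinch m P)) (Pinch m (Nu n P))"
| s_nufuse: "n \<noteq> m \<Longrightarrow> n \<notin> fnM S \<Longrightarrow> eqS (Nu n (Fuse m S P)) (Fuse m S (Nu n P))"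
| s_par: "eqS P P' \<Longrightarrow> eqS Q Q' \<Longrightarrow> eqS (SPar P Q) (SPar P' Q')"
| s_cell: "eqM S T \<Longrightarrow> eqS P Q \<Longrightarrow> eqS (Cell S P) (Cell T Q)"
| s_pinch: "eqS P Q \<Longrightarrow> eqS (Pinch n P) (Pinch n Q)"
| s_fuse: "eqS (Cell S P) (Cell T Q) \<Longrightarrow> eqS (Fuse n S P) (Fuse n T Q)"

definition ok_e :: "name set \<Rightarrow> name set \<Rightarrow> name set \<Rightarrow> name set \<Rightarrow> bool" where
  "ok_e G1 G2 D1 D2 \<longleftrightarrow> (G1 \<union> G2) \<inter> (D1 \<union> D2) = {}"

definition ok_t :: "name set \<Rightarrow> act set \<Rightarrow> act set \<Rightarrow> bool" where
  "ok_t G \<tau> \<sigma> \<longleftrightarrow> dualset (restr \<tau> G) = restr \<sigma> G"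

(* typing of membranes:  tyM G1 G2 S tau  is  G1;G2 |- S : tau.
   A comma "X,Y" in a judgement is a disjoint union, rendered as X \<union> Y with X \<inter> Y = {}. *)
inductive tyM :: "name set \<Rightarrow> name set \<Rightarrow> 'ap mem \<Rightarrow> act set \<Rightarrow> bool" where
  tm_empty: "tyM {} {} MNil {}"
| tm_prot: "(\<forall>x \<in> fn_if \<rho>. cnt \<rho> x \<le> 2) \<Longrightarrow>
    tyM {x. cnt \<rho> x = 1} {x. cnt \<rho> x = 2} (MProt A \<rho>) {}"
| tm_copinch: "tyM G1 G2 S {} \<Longrightarrow> actM S = {} \<Longrightarrow> x \<notin> G1 \<Longrightarrow> x \<notin> G2 \<Longrightarrow>
    tyM (insert x G1) G2 (CoPinch x S) {Apc x}"
| tm_cof: "tyM {x} {} (CoFuse x) {Afc x}"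
| tm_par: "tyM (G1 \<union> G) G2 K \<tau> \<Longrightarrow> G1 \<inter> G = {} \<Longrightarrow>
    tyM (D1 \<union> G) D2 L \<sigma> \<Longrightarrow> D1 \<inter> G = {} \<Longrightarrow>
    ok_e G1 G2 D1 D2 \<Longrightarrow> ok_t G \<tau> \<sigma> \<Longrightarrow>
    G1 \<inter> D1 = {} \<Longrightarrow> G2 \<inter> D2 = {} \<Longrightarrow> G2 \<inter> G = {} \<Longrightarrow> D2 \<inter> G = {} \<Longrightarrow>
    tyM (G1 \<union> D1) (G2 \<union> D2 \<union> G) (MPar K L) (\<tau> \<union> \<sigma>)"

inductive tyS :: "name set \<Rightarrow> name set \<Rightarrow> ('pp, 'ap) sys \<Rightarrow> act set \<Rightarrow> bool" where
  ts_empty: "tyS {} {} SNil {}"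
| ts_prot: "(\<forall>x \<in> fn_if \<rho>. cnt \<rho> x \<le> 2) \<Longrightarrow>
    tyS {x. cnt \<rho> x = 1} {x. cnt \<rho> x = 2} (SProt A \<rho>) {}"
| ts_pinch: "tyS G1 G2 P {} \<Longrightarrow> actS P = {} \<Longrightarrow> x \<notin> G1 \<Longrightarrow> x \<notin> G2 \<Longrightarrow>
    tyS (insert x G1) G2 (Pinch x P) {Ap x}"
| ts_fuse: "tyS G1 G2 (Cell S P) {} \<Longrightarrow> actS (Cell S P) = {} \<Longrightarrow> x \<notin> G1 \<Longrightarrow> x \<notin> G2 \<Longrightarrow>
    tyS (insert x G1) G2 (Fuse x S P) {Af x}"
| ts_nuprot: "tyS G1 G2 P \<tau> \<Longrightarrow> x \<notin> G1 \<Longrightarrow> restr \<tau> {x} = {} \<Longrightarrow>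
    tyS G1 (G2 - {x}) (Nu x P) \<tau>"
| ts_nupinch: "tyS G1 (insert x G2) P (\<tau> \<union> {Ap x, Apc x}) \<Longrightarrow> x \<notin> G2 \<Longrightarrow>
    {Ap x, Apc x} \<inter> \<tau> = {} \<Longrightarrow> tyS G1 G2 (Nu x P) \<tau>"
| ts_nufuse: "tyS G1 (insert x G2) P (\<tau> \<union> {Af x, Afc x}) \<Longrightarrow> x \<notin> G2 \<Longrightarrow>
    {Af x, Afc x} \<inter> \<tau> = {} \<Longrightarrow> tyS G1 G2 (Nu x P) \<tau>"
| ts_par: "tyS (G1 \<union> G) G2 K \<tau> \<Longrightarrow> G1 \<inter> G = {} \<Longrightarrow>
    tyS (D1 \<union> G) D2 L \<sigma> \<Longrightarrow> D1 \<inter> G = {} \<Longrightarrow>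
    ok_e G1 G2 D1 D2 \<Longrightarrow> ok_t G \<tau> \<sigma> \<Longrightarrow>
    G1 \<inter> D1 = {} \<Longrightarrow> G2 \<inter> D2 = {} \<Longrightarrow> G2 \<inter> G = {} \<Longrightarrow> D2 \<inter> G = {} \<Longrightarrow>
    tyS (G1 \<union> D1) (G2 \<union> D2 \<union> G) (SPar K L) (\<tau> \<union> \<sigma>)"
| ts_cell: "tyM (G1 \<union> G) G2 S \<tau> \<Longrightarrow> G1 \<inter> G = {} \<Longrightarrow>
    tyS G D2 P \<sigma> \<Longrightarrow>
    ok_e G1 G2 {} D2 \<Longrightarrow> ok_t G \<tau> \<sigma> \<Longrightarrow>
    G2 \<inter> D2 = {} \<Longrightarrow> G2 \<inter> G = {} \<Longrightarrow> D2 \<inter> G = {} \<Longrightarrow>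
    tyS G1 (G2 \<union> D2 \<union> G) (Cell S P) (\<tau> \<union> \<sigma>)"

end

theory Submission
  imports Defs
begin

lemma dual_dual[simp]: "dual (dual a) = a" by (cases a) auto
lemma actname_dual[simp]: "actname (dual a) = actname a" by (cases a) auto

lemma swapN_swapN[simp]: "swapN a b (swapN a b n) = n" by (auto simp: swapN_def)
lemma swapN_eq_iff[simp]: "(swapN a b n = swapN a b m) = (n = m)" by (auto simp: swapN_def)
lemma swapN_sym: "swapN a b = swapN b a" by (auto simp: swapN_def fun_eq_iff)
lemma inj_swapN[simp]: "inj (swapN a b)" by (auto intro: injI)
lemma swapN_same[simp]: "swapN a a n = n" by (auto simp: swapN_def)
lemma swapN_id: "n \<noteq> a \<Longrightarrow> n \<noteq> b \<Longrightarrow> swapN a b n = n" by (auto simp: swapN_def)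
lemma swapN_a[simp]: "swapN a b a = b" by (auto simp: swapN_def)
lemma swapN_b[simp]: "swapN a b b = a" by (auto simp: swapN_def)

fun swA :: "name \<Rightarrow> name \<Rightarrow> act \<Rightarrow> act" where
  "swA a b (Ap n) = Ap (swapN a b n)" | "swA a b (Apc n) = Apc (swapN a b n)"
| "swA a b (Af n) = Af (swapN a b n)" | "swA a b (Afc n) = Afc (swapN a b n)"

lemma actname_swA[simp]: "actname (swA a b c) = swapN a b (actname c)" by (cases c) auto
lemma dual_swA[simp]: "dual (swA a b c) = swA a b (dual c)" by (cases c) auto
lemma swA_swA[simp]: "swA a b (swA a b c) = c" by (cases c) auto
lemma inj_swA[simp]: "inj (swA a b)" by (metis injI swA_swA)
lemma swA_id: "actname c \<noteq> a \<Longrightarrow> actname c \<noteq> b \<Longrightarrow> swA a b c = c"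
  by (cases c) (auto simp: swapN_def)

lemma image_invol: "(\<And>x. f (f x) = x) \<Longrightarrow> f ` {x. P x} = {x. P (f x)}"
proof
  assume h: "\<And>x. f (f x) = x"
  show "f ` {x. P x} \<subseteq> {x. P (f x)}" using h by auto
  show "{x. P (f x)} \<subseteq> f ` {x. P x}" using h by (auto simp: image_iff) (metis)
qed

lemma restr_sw: "restr (swA a b ` \<tau>) (swapN a b ` X) = swA a b ` restr \<tau> X"
  by (auto simp: restr_def image_iff)
lemma dualset_sw: "dualset (swA a b ` \<tau>) = swA a b ` dualset \<tau>"
  by (auto simp: dualset_def image_iff)
lemma ok_t_sw: "ok_t G \<tau> \<sigma> \<Longrightarrow> ok_t (swapN a b ` G) (swA a b ` \<tau>) (swA a b ` \<sigma>)"
  by (simp add: ok_t_def restr_sw dualset_sw)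
lemma ok_e_sw: "ok_e G1 G2 D1 D2 \<Longrightarrow> ok_e (swapN a b ` G1) (swapN a b ` G2) (swapN a b ` D1) (swapN a b ` D2)"
  by (auto simp: ok_e_def)

lemma swapV_eq: "(swapV a b v = Nm x) = (v = Nm (swapN a b x))"
  by (cases v) auto

lemma cnt_sw: "cnt (swapI a b \<rho>) x = cnt \<rho> (swapN a b x)"
  unfolding cnt_def swapI_def by (simp add: fmlookup_map swapV_eq)
lemma fn_if_sw: "fn_if (swapI a b \<rho>) = swapN a b ` fn_if \<rho>"
  unfolding fn_if_def swapI_def
  by (auto simp: fmlookup_map swapV_eq image_iff) (metis swapN_swapN)

lemma fnM_sw: "fnM (swapM a b S) = swapN a b ` fnM S"
  by (induction S) (auto simp: fn_if_sw)
lemma fnS_sw: "fnS (swapS a b P) = swapN a b ` fnS P"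
  by (induction P) (auto simp: fn_if_sw fnM_sw image_set_diff[OF inj_swapN])
lemma actM_sw: "actM (swapM a b S) = swA a b ` actM S"
  by (induction S) auto
lemma actS_sw: "actS (swapS a b P) = swA a b ` actS P"
  by (induction P) (auto simp: actM_sw)
lemma swapV_swapV[simp]: "swapV a b (swapV a b v) = v" by (cases v) auto
lemma swapI_swapI[simp]: "swapI a b (swapI a b \<rho>) = \<rho>"
  by (simp add: swapI_def fmap.map_comp comp_def fmap.map_ident)
lemma swapM_swapM[simp]: "swapM a b (swapM a b S) = S"
  by (induction S) auto
lemma swapS_swapS[simp]: "swapS a b (swapS a b P) = P"
  by (induction P) auto

definition wf :: "name set \<Rightarrow> name set \<Rightarrow> act set \<Rightarrow> bool" where
  "wf A B \<tau> \<longleftrightarrow> A \<inter> B = {} \<and> (\<forall>a\<in>\<tau>. actname a \<in> A \<union> B) \<and>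
     (\<forall>a\<in>\<tau>. \<forall>b\<in>\<tau>. actname a = actname b \<longrightarrow> actname a \<in> A \<longrightarrow> a = b) \<and>
     (\<forall>a\<in>\<tau>. actname a \<in> B \<longrightarrow> dual a \<in> \<tau> \<and> (\<forall>b\<in>\<tau>. actname b = actname a \<longrightarrow> b = a \<or> b = dual a))"

lemma ok_t_fw: "ok_t G \<tau> \<sigma> \<Longrightarrow> a \<in> \<tau> \<Longrightarrow> actname a \<in> G \<Longrightarrow> dual a \<in> \<sigma>"
  unfolding ok_t_def dualset_def restr_def by (metis (mono_tags, lifting) actname_dual image_eqI mem_Collect_eq)
lemma ok_t_bw: "ok_t G \<tau> \<sigma> \<Longrightarrow> b \<in> \<sigma> \<Longrightarrow> actname b \<in> G \<Longrightarrow> dual b \<in> \<tau>"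
  unfolding ok_t_def dualset_def restr_def by (smt (verit, best) dual_dual image_iff mem_Collect_eq)

lemma wfI: "A \<inter> B = {} \<Longrightarrow> (\<And>a. a\<in>\<tau> \<Longrightarrow> actname a \<in> A \<union> B) \<Longrightarrow>
  (\<And>a b. a\<in>\<tau> \<Longrightarrow> b\<in>\<tau> \<Longrightarrow> actname a = actname b \<Longrightarrow> actname a \<in> A \<Longrightarrow> a = b) \<Longrightarrow>
  (\<And>a. a\<in>\<tau> \<Longrightarrow> actname a \<in> B \<Longrightarrow> dual a \<in> \<tau> \<and> (\<forall>b\<in>\<tau>. actname b = actname a \<longrightarrow> b = a \<or> b = dual a)) \<Longrightarrow> wf A B \<tau>"
  unfolding wf_def by blast

lemma wf_disj: "wf A B \<tau> \<Longrightarrow> A \<inter> B = {}" by (simp add: wf_def)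

lemma wf_par:
  assumes w1: "wf (G1 \<union> G) G2 \<tau>" and w2: "wf (D1 \<union> G) D2 \<sigma>"
    and h1: "G1 \<inter> G = {}" and h2: "D1 \<inter> G = {}" and h3: "ok_e G1 G2 D1 D2" and ot: "ok_t G \<tau> \<sigma>"
    and h4: "G1 \<inter> D1 = {}" and h5: "G2 \<inter> D2 = {}" and h6: "G2 \<inter> G = {}" and h7: "D2 \<inter> G = {}"
  shows "wf (G1 \<union> D1) (G2 \<union> D2 \<union> G) (\<tau> \<union> \<sigma>)"
proof -
  have d1: "(G1 \<union> G) \<inter> G2 = {}" using wf_disj[OF w1] .
  have d2: "(D1 \<union> G) \<inter> D2 = {}" using wf_disj[OF w2] .
  have e: "(G1 \<union> G2) \<inter> (D1 \<union> D2) = {}" using h3 unfolding ok_e_def .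
  have dG1: "\<And>x. x \<in> G1 \<Longrightarrow> x \<notin> G \<and> x \<notin> G2 \<and> x \<notin> D1 \<and> x \<notin> D2"
    using h1 d1 e by blast
  have dD1: "\<And>x. x \<in> D1 \<Longrightarrow> x \<notin> G \<and> x \<notin> G2 \<and> x \<notin> G1 \<and> x \<notin> D2"
    using h2 d2 e by blast
  have dG: "\<And>x. x \<in> G \<Longrightarrow> x \<notin> G1 \<and> x \<notin> G2 \<and> x \<notin> D1 \<and> x \<notin> D2"
    using h1 h2 h6 h7 by blast
  have dG2: "\<And>x. x \<in> G2 \<Longrightarrow> x \<notin> G \<and> x \<notin> G1 \<and> x \<notin> D1 \<and> x \<notin> D2"
    using h6 d1 e h5 by blast
  have dD2: "\<And>x. x \<in> D2 \<Longrightarrow> x \<notin> G \<and> x \<notin> G1 \<and> x \<notin> D1 \<and> x \<notin> G2"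
    using h7 d2 e h5 by blast
  have n1: "\<And>a. a \<in> \<tau> \<Longrightarrow> actname a \<in> G1 \<union> G \<union> G2" using w1 unfolding wf_def by blast
  have n2: "\<And>a. a \<in> \<sigma> \<Longrightarrow> actname a \<in> D1 \<union> G \<union> D2" using w2 unfolding wf_def by blast
  have u1: "\<And>a b. a \<in> \<tau> \<Longrightarrow> b \<in> \<tau> \<Longrightarrow> actname a = actname b \<Longrightarrow> actname a \<in> G1 \<union> G \<Longrightarrow> a = b"
    using w1 unfolding wf_def by blast
  have u2: "\<And>a b. a \<in> \<sigma> \<Longrightarrow> b \<in> \<sigma> \<Longrightarrow> actname a = actname b \<Longrightarrow> actname a \<in> D1 \<union> G \<Longrightarrow> a = b"
    using w2 unfolding wf_def by blast
  have b1: "\<And>a b. a \<in> \<tau> \<Longrightarrow> actname a \<in> G2 \<Longrightarrow> dual a \<in> \<tau> \<and> (b \<in> \<tau> \<longrightarrow> actname b = actname a \<longrightarrow> b = a \<or> b = dual a)"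
    using w1 unfolding wf_def by blast
  have b2: "\<And>a b. a \<in> \<sigma> \<Longrightarrow> actname a \<in> D2 \<Longrightarrow> dual a \<in> \<sigma> \<and> (b \<in> \<sigma> \<longrightarrow> actname b = actname a \<longrightarrow> b = a \<or> b = dual a)"
    using w2 unfolding wf_def by blast
  show ?thesis
  proof (rule wfI)
    show "(G1 \<union> D1) \<inter> (G2 \<union> D2 \<union> G) = {}" using dG1 dD1 by blast
  next
    fix a assume "a \<in> \<tau> \<union> \<sigma>" thus "actname a \<in> G1 \<union> D1 \<union> (G2 \<union> D2 \<union> G)" using n1 n2 by blast
  next
    fix a b assume a: "a \<in> \<tau> \<union> \<sigma>" and b: "b \<in> \<tau> \<union> \<sigma>" and e: "actname a = actname b"
      and x: "actname a \<in> G1 \<union> D1"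
    show "a = b"
    proof (cases "actname a \<in> G1")
      case True
      moreover have "actname b \<in> G1" using True e by simp
      ultimately have "a \<notin> \<sigma>" "b \<notin> \<sigma>" using n2 dG1 by blast+
      then have "a \<in> \<tau>" "b \<in> \<tau>" using a b by blast+
      then show ?thesis using u1 e True by blast
    next
      case False
      then have ad: "actname a \<in> D1" using x by blast
      moreover have "actname b \<in> D1" using ad e by simp
      ultimately have "a \<notin> \<tau>" "b \<notin> \<tau>" using n1 dD1 by blast+
      then have "a \<in> \<sigma>" "b \<in> \<sigma>" using a b by blast+
      then show ?thesis using u2 e ad by blast
    qed
  next
    fix a assume a: "a \<in> \<tau> \<union> \<sigma>" and x: "actname a \<in> G2 \<union> D2 \<union> G"
    have "actname a \<in> G2 \<or> actname a \<in> D2 \<or> actname a \<in> G" using x by blast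
    then show "dual a \<in> \<tau> \<union> \<sigma> \<and> (\<forall>b\<in>\<tau> \<union> \<sigma>. actname b = actname a \<longrightarrow> b = a \<or> b = dual a)"
    proof (elim disjE)
      assume g: "actname a \<in> G2"
      have "a \<notin> \<sigma>" using n2 dG2 g by blast
      then have at: "a \<in> \<tau>" using a by blast
      have "\<forall>b\<in>\<tau> \<union> \<sigma>. actname b = actname a \<longrightarrow> b = a \<or> b = dual a"
      proof (intro ballI impI)
        fix b assume bb: "b \<in> \<tau> \<union> \<sigma>" and be: "actname b = actname a"
        have "b \<notin> \<sigma>" using n2[of b] dG2[of "actname a"] g be by auto
        then have "b \<in> \<tau>" using bb by blast
        then show "b = a \<or> b = dual a" using b1[OF at g] be by blast
      qed
      then show ?thesis using b1[OF at g] by blast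
    next
      assume g: "actname a \<in> D2"
      have "a \<notin> \<tau>" using n1 dD2 g by blast
      then have at: "a \<in> \<sigma>" using a by blast
      have "\<forall>b\<in>\<tau> \<union> \<sigma>. actname b = actname a \<longrightarrow> b = a \<or> b = dual a"
      proof (intro ballI impI)
        fix b assume bb: "b \<in> \<tau> \<union> \<sigma>" and be: "actname b = actname a"
        have "b \<notin> \<tau>" using n1[of b] dD2[of "actname a"] g be by auto
        then have "b \<in> \<sigma>" using bb by blast
        then show "b = a \<or> b = dual a" using b2[OF at g] be by blast
      qed
      then show ?thesis using b2[OF at g] by blast
    next
      assume g: "actname a \<in> G"
      have g1: "actname a \<in> G1 \<union> G" "actname a \<in> D1 \<union> G" using g by blast+
      show ?thesis
      proof (cases "a \<in> \<tau>")
        case True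
        have da: "dual a \<in> \<sigma>" using ok_t_fw[OF ot True g] .
        have "\<forall>b\<in>\<tau> \<union> \<sigma>. actname b = actname a \<longrightarrow> b = a \<or> b = dual a"
        proof (intro ballI impI)
          fix b assume "b \<in> \<tau> \<union> \<sigma>" and be: "actname b = actname a"
          from \<open>b \<in> \<tau> \<union> \<sigma>\<close> show "b = a \<or> b = dual a"
          proof
            assume bt: "b \<in> \<tau>" then show ?thesis using u1[OF True bt] g1 be by simp
          next
            assume bs: "b \<in> \<sigma>" then show ?thesis using u2[OF da bs] g1 be by simp
          qed
        qed
        then show ?thesis using da by blast
      next
        case False
        then have as: "a \<in> \<sigma>" using a by blast
        have da: "dual a \<in> \<tau>" using ok_t_bw[OF ot as g] .
        have "\<forall>b\<in>\<tau> \<union> \<sigma>. actname b = actname a \<longrightarrow> b = a \<or> b = dual a"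
        proof (intro ballI impI)
          fix b assume "b \<in> \<tau> \<union> \<sigma>" and be: "actname b = actname a"
          from \<open>b \<in> \<tau> \<union> \<sigma>\<close> show "b = a \<or> b = dual a"
          proof
            assume bt: "b \<in> \<tau>" then show ?thesis using u1[OF da bt] g1 be by simp
          next
            assume bs: "b \<in> \<sigma>" then show ?thesis using u2[OF as bs] g1 be by simp
          qed
        qed
        then show ?thesis using da by blast
      qed
    qed
  qed
qed

lemma wf_nuprot: "wf A B \<tau> \<Longrightarrow> x \<notin> A \<Longrightarrow> restr \<tau> {x} = {} \<Longrightarrow> wf A (B - {x}) \<tau>"
  unfolding wf_def restr_def by blast

lemma wf_nupair: assumes w: "wf A (insert x B) (\<tau> \<union> {p, dual p})" and px: "actname p = x" and xb: "x \<notin> B"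
  and d: "{p, dual p} \<inter> \<tau> = {}" shows "wf A B \<tau>"
proof -
  have u: "\<And>a b. a \<in> \<tau> \<union> {p, dual p} \<Longrightarrow> actname a \<in> insert x B \<Longrightarrow> b \<in> \<tau> \<union> {p, dual p} \<Longrightarrow> actname b = actname a \<Longrightarrow> b = a \<or> b = dual a"
    using w unfolding wf_def by blast
  have nx: "\<And>a. a \<in> \<tau> \<Longrightarrow> actname a \<noteq> x"
  proof
    fix a assume a: "a \<in> \<tau>" "actname a = x"
    have "a = p \<or> a = dual p" using u[of p a] px a by simp
    then show False using d a by blast
  qed
  have d0: "A \<inter> insert x B = {}" using wf_disj[OF w] .
  show ?thesis
  proof (rule wfI)
    show "A \<inter> B = {}" using d0 by blast
  next
    fix a assume a: "a \<in> \<tau>"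
    have "actname a \<in> A \<union> insert x B" using w a unfolding wf_def by blast
    then show "actname a \<in> A \<union> B" using nx[OF a] by blast
  next
    fix a b assume "a \<in> \<tau>" "b \<in> \<tau>" "actname a = actname b" "actname a \<in> A"
    then show "a = b" using w unfolding wf_def by blast
  next
    fix a assume a: "a \<in> \<tau>" and ab: "actname a \<in> B"
    have "dual a \<in> \<tau> \<union> {p, dual p}" using w a ab unfolding wf_def by blast
    moreover have "dual a \<noteq> p \<and> dual a \<noteq> dual p" using nx[OF a] px by (metis actname_dual)
    ultimately have "dual a \<in> \<tau>" by blast
    moreover have "\<forall>b\<in>\<tau>. actname b = actname a \<longrightarrow> b = a \<or> b = dual a"
    proof (intro ballI impI)
      fix b assume "b \<in> \<tau>" "actname b = actname a"
      then show "b = a \<or> b = dual a" using u[of a b] a ab by blast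
    qed
    ultimately show "dual a \<in> \<tau> \<and> (\<forall>b\<in>\<tau>. actname b = actname a \<longrightarrow> b = a \<or> b = dual a)" by blast
  qed
qed

lemma wf_pinch: "wf G1 G2 {} \<Longrightarrow> x \<notin> G1 \<Longrightarrow> x \<notin> G2 \<Longrightarrow> actname p = x \<Longrightarrow> wf (insert x G1) G2 {p}"
  unfolding wf_def by auto

lemma wf_prot: "wf {x. cnt \<rho> x = 1} {x. cnt \<rho> x = 2} {}"
  unfolding wf_def by auto

lemma cnt_fn: "cnt \<rho> x = Suc n \<Longrightarrow> x \<in> fn_if \<rho>"
  unfolding cnt_def fn_if_def by (metis (mono_tags, lifting) card.empty empty_Collect_eq mem_Collect_eq nat.distinct(1))

lemma tyM_inv: "tyM A B S \<tau> \<Longrightarrow> wf A B \<tau> \<and> A \<union> B \<subseteq> fnM S \<and> \<tau> \<subseteq> actM S"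
proof (induction rule: tyM.induct)
  case tm_empty then show ?case by (simp add: wf_def)
next
  case (tm_prot \<rho> A) then show ?case using wf_prot cnt_fn
    by (auto simp: numeral_2_eq_2)
next
  case (tm_copinch G1 G2 S x) then show ?case using wf_pinch[of G1 G2 x "Apc x"] by auto
next
  case (tm_cof x) then show ?case by (auto simp: wf_def)
next
  case (tm_par G1 G G2 K \<tau> D1 D2 L \<sigma>) then show ?case using wf_par[of G1 G G2 \<tau> D1 D2 \<sigma>] by auto
qed

lemma tyS_inv: "tyS A B P \<tau> \<Longrightarrow> wf A B \<tau> \<and> A \<union> B \<subseteq> fnS P \<and> \<tau> \<subseteq> actS P"
proof (induction rule: tyS.induct)
  case ts_empty then show ?case by (simp add: wf_def)
next
  case (ts_prot \<rho> A) then show ?case using wf_prot cnt_fn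
    by (auto simp: numeral_2_eq_2)
next
  case (ts_pinch G1 G2 P x) then show ?case using wf_pinch[of G1 G2 x "Ap x"] by auto
next
  case (ts_fuse G1 G2 S P x) then show ?case using wf_pinch[of G1 G2 x "Af x"] by auto
next
  case (ts_nuprot G1 G2 P \<tau> x) then show ?case using wf_nuprot[of G1 G2 \<tau> x]
    by (auto simp: restr_def)
next
  case (ts_nupinch G1 x G2 P \<tau>)
  have "x \<notin> G1" using wf_disj[OF conjunct1[OF ts_nupinch.IH]] by blast
  then show ?case using ts_nupinch wf_nupair[of G1 x G2 \<tau> "Ap x"] by auto
next
  case (ts_nufuse G1 x G2 P \<tau>)
  have "x \<notin> G1" using wf_disj[OF conjunct1[OF ts_nufuse.IH]] by blast
  then show ?case using ts_nufuse wf_nupair[of G1 x G2 \<tau> "Af x"] by auto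
next
  case (ts_par G1 G G2 K \<tau> D1 D2 L \<sigma>) then show ?case using wf_par[of G1 G G2 \<tau> D1 D2 \<sigma>] by auto
next
  case (ts_cell G1 G G2 S \<tau> D2 P \<sigma>)
  have "wf (G1 \<union> {}) (G2 \<union> D2 \<union> G) (\<tau> \<union> \<sigma>)"
    using ts_cell tyM_inv[OF ts_cell.hyps(1)] wf_par[of G1 G G2 \<tau> "{}" D2 \<sigma>] unfolding ok_e_def by auto
  then show ?case using ts_cell tyM_inv[OF ts_cell.hyps(1)] by auto
qed

lemma img_disj: "A \<inter> B = {} \<Longrightarrow> swapN a b ` A \<inter> swapN a b ` B = {}"
  by auto
lemma restr_sw1: "restr \<tau> {x} = {} \<Longrightarrow> restr (swA a b ` \<tau>) {swapN a b x} = {}"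
  using restr_sw[of a b \<tau> "{x}"] by simp

lemma tyM_sw: "tyM A B S \<tau> \<Longrightarrow> tyM (swapN a b ` A) (swapN a b ` B) (swapM a b S) (swA a b ` \<tau>)"
proof (induction rule: tyM.induct)
  case tm_empty then show ?case by (simp add: tyM.tm_empty)
next
  case (tm_prot \<rho> A)
  have e: "\<And>k. swapN a b ` {x. cnt \<rho> x = k} = {x. cnt (swapI a b \<rho>) x = k}"
    by (simp add: image_invol cnt_sw)
  have h: "\<forall>x\<in>fn_if (swapI a b \<rho>). cnt (swapI a b \<rho>) x \<le> 2" using tm_prot by (auto simp: fn_if_sw cnt_sw)
  show ?case unfolding e using tyM.tm_prot[OF h] by simp
next
  case (tm_copinch G1 G2 S x)
  show ?case using tm_copinch by (auto intro!: tyM.tm_copinch simp: actM_sw)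
next
  case (tm_cof x) then show ?case by (simp add: tyM.tm_cof)
next
  case (tm_par G1 G G2 K \<tau> D1 D2 L \<sigma>)
  note ih1 = tm_par.IH(1)[simplified image_Un] and ih2 = tm_par.IH(2)[simplified image_Un]
  show ?case unfolding image_Un swapM.simps
    by (rule tyM.tm_par[OF ih1 _ ih2]) (use tm_par.hyps in \<open>auto intro: img_disj ok_t_sw ok_e_sw\<close>)
qed

lemma tyS_sw: "tyS A B P \<tau> \<Longrightarrow> tyS (swapN a b ` A) (swapN a b ` B) (swapS a b P) (swA a b ` \<tau>)"
proof (induction rule: tyS.induct)
  case ts_empty then show ?case by (simp add: tyS.ts_empty)
next
  case (ts_prot \<rho> A)
  have e: "\<And>k. swapN a b ` {x. cnt \<rho> x = k} = {x. cnt (swapI a b \<rho>) x = k}"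
    by (simp add: image_invol cnt_sw)
  have h: "\<forall>x\<in>fn_if (swapI a b \<rho>). cnt (swapI a b \<rho>) x \<le> 2" using ts_prot by (auto simp: fn_if_sw cnt_sw)
  show ?case unfolding e using tyS.ts_prot[OF h] by simp
next
  case (ts_pinch G1 G2 P x)
  show ?case using ts_pinch by (auto intro!: tyS.ts_pinch simp: actS_sw)
next
  case (ts_fuse G1 G2 S P x)
  show ?case using ts_fuse by (auto intro!: tyS.ts_fuse simp: actS_sw actM_sw)
next
  case (ts_nuprot G1 G2 P \<tau> x)
  show ?case using ts_nuprot
    by (auto intro!: tyS.ts_nuprot restr_sw1 simp: image_set_diff[OF inj_swapN])
next
  case (ts_nupinch G1 x G2 P \<tau>)
  have ih: "tyS (swapN a b ` G1) (insert (swapN a b x) (swapN a b ` G2)) (swapS a b P)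
     (swA a b ` \<tau> \<union> {Ap (swapN a b x), Apc (swapN a b x)})"
    using ts_nupinch.IH by (simp add: image_Un)
  have d: "{Ap (swapN a b x), Apc (swapN a b x)} \<inter> swA a b ` \<tau> = {}"
    using ts_nupinch.hyps(3) by (auto simp: image_iff) (metis swA.simps swA_swA)+
  show ?case using ts_nupinch.hyps(2) by (auto intro!: tyS.ts_nupinch[OF ih _ d])
next
  case (ts_nufuse G1 x G2 P \<tau>)
  have ih: "tyS (swapN a b ` G1) (insert (swapN a b x) (swapN a b ` G2)) (swapS a b P)
     (swA a b ` \<tau> \<union> {Af (swapN a b x), Afc (swapN a b x)})"
    using ts_nufuse.IH by (simp add: image_Un)
  have d: "{Af (swapN a b x), Afc (swapN a b x)} \<inter> swA a b ` \<tau> = {}"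
    using ts_nufuse.hyps(3) by (auto simp: image_iff) (metis swA.simps swA_swA)+
  show ?case using ts_nufuse.hyps(2) by (auto intro!: tyS.ts_nufuse[OF ih _ d])
next
  case (ts_par G1 G G2 K \<tau> D1 D2 L \<sigma>)
  note ih1 = ts_par.IH(1)[simplified image_Un] and ih2 = ts_par.IH(2)[simplified image_Un]
  show ?case unfolding image_Un swapS.simps
    by (rule tyS.ts_par[OF ih1 _ ih2]) (use ts_par.hyps in \<open>auto intro: img_disj ok_t_sw ok_e_sw\<close>)
next
  case (ts_cell G1 G G2 S \<tau> D2 P \<sigma>)
  note ih1 = tyM_sw[OF ts_cell.hyps(1), of a b, simplified image_Un] and ih2 = ts_cell.IH
  show ?case unfolding image_Un swapS.simps
    by (rule tyS.ts_cell[OF ih1 _ ih2]) (use ts_cell.hyps in \<open>auto intro: img_disj ok_t_sw ok_e_sw[of _ _ "{}", simplified]\<close>)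
qed

type_synonym tj = "name set \<Rightarrow> name set \<Rightarrow> act set \<Rightarrow> bool"

definition TS :: "('pp,'ap) sys \<Rightarrow> tj" where "TS P = (\<lambda>A B \<tau>. tyS A B P \<tau>)"
definition TM :: "'ap mem \<Rightarrow> tj" where "TM S = (\<lambda>A B \<tau>. tyM A B S \<tau>)"

definition E :: tj where "E = (\<lambda>A B \<tau>. A = {} \<and> B = {} \<and> \<tau> = {})"

definition parT :: "tj \<Rightarrow> tj \<Rightarrow> tj" where
  "parT T1 T2 X Y \<rho> \<longleftrightarrow> (\<exists>G1 G D1 G2 D2 \<tau> \<sigma>. X = G1 \<union> D1 \<and> Y = G2 \<union> D2 \<union> G \<and> \<rho> = \<tau> \<union> \<sigma> \<and>
     T1 (G1 \<union> G) G2 \<tau> \<and> G1 \<inter> G = {} \<and> T2 (D1 \<union> G) D2 \<sigma> \<and> D1 \<inter> G = {} \<and>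
     ok_e G1 G2 D1 D2 \<and> ok_t G \<tau> \<sigma> \<and>
     G1 \<inter> D1 = {} \<and> G2 \<inter> D2 = {} \<and> G2 \<inter> G = {} \<and> D2 \<inter> G = {})"

definition cellT :: "tj \<Rightarrow> tj \<Rightarrow> tj" where
  "cellT T1 T2 X Y \<rho> \<longleftrightarrow> (\<exists>G G2 D2 \<tau> \<sigma>. Y = G2 \<union> D2 \<union> G \<and> \<rho> = \<tau> \<union> \<sigma> \<and>
     T1 (X \<union> G) G2 \<tau> \<and> X \<inter> G = {} \<and> T2 G D2 \<sigma> \<and>
     ok_e X G2 {} D2 \<and> ok_t G \<tau> \<sigma> \<and> G2 \<inter> D2 = {} \<and> G2 \<inter> G = {} \<and> D2 \<inter> G = {})"

definition nu0 :: "name \<Rightarrow> tj \<Rightarrow> tj" where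
  "nu0 x T A B \<tau> \<longleftrightarrow> (\<exists>B'. B = B' - {x} \<and> T A B' \<tau> \<and> x \<notin> A \<and> restr \<tau> {x} = {})"
definition nuP :: "name \<Rightarrow> tj \<Rightarrow> act \<Rightarrow> tj" where
  "nuP x T p A B \<tau> \<longleftrightarrow> T A (insert x B) (\<tau> \<union> {p, dual p}) \<and> x \<notin> B \<and> {p, dual p} \<inter> \<tau> = {}"
definition nuT :: "name \<Rightarrow> tj \<Rightarrow> tj" where
  "nuT x T A B \<tau> \<longleftrightarrow> nu0 x T A B \<tau> \<or> nuP x T (Ap x) A B \<tau> \<or> nuP x T (Af x) A B \<tau>"

definition pT :: "(name \<Rightarrow> act) \<Rightarrow> name \<Rightarrow> tj \<Rightarrow> bool \<Rightarrow> tj" where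
  "pT c n T e A B \<tau> \<longleftrightarrow> (\<exists>G1. A = insert n G1 \<and> \<tau> = {c n} \<and> T G1 B {} \<and> e \<and> n \<notin> G1 \<and> n \<notin> B)"

inductive_cases nilE: "tyS A B SNil \<tau>"
inductive_cases parE: "tyS A B (SPar P Q) \<tau>"
inductive_cases cellE: "tyS A B (Cell S P) \<tau>"
inductive_cases nuE: "tyS A B (Nu x P) \<tau>"
inductive_cases pinchE: "tyS A B (Pinch x P) \<tau>"
inductive_cases fuseE: "tyS A B (Fuse x S P) \<tau>"
inductive_cases mnilE: "tyM A B MNil \<tau>"
inductive_cases mparE: "tyM A B (MPar P Q) \<tau>"
inductive_cases copinchE: "tyM A B (CoPinch x P) \<tau>"

lemma TS_SNil: "TS SNil = E"
  by (auto simp: fun_eq_iff TS_def E_def intro: tyS.ts_empty elim: nilE)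
lemma TM_MNil: "TM MNil = E"
  by (auto simp: fun_eq_iff TM_def E_def intro: tyM.tm_empty elim: mnilE)

lemma TS_SPar: "TS (SPar P Q) = parT (TS P) (TS Q)"
proof (intro ext iffI)
  fix X Y \<rho> assume "TS (SPar P Q) X Y \<rho>"
  then show "parT (TS P) (TS Q) X Y \<rho>" unfolding TS_def parT_def
    by (elim parE) blast
next
  fix X Y \<rho> assume "parT (TS P) (TS Q) X Y \<rho>"
  then show "TS (SPar P Q) X Y \<rho>" unfolding TS_def parT_def
    by (auto intro: tyS.ts_par)
qed

lemma TM_MPar: "TM (MPar P Q) = parT (TM P) (TM Q)"
proof (intro ext iffI)
  fix X Y \<rho> assume "TM (MPar P Q) X Y \<rho>"
  then show "parT (TM P) (TM Q) X Y \<rho>" unfolding TM_def parT_def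
    by (elim mparE) blast
next
  fix X Y \<rho> assume "parT (TM P) (TM Q) X Y \<rho>"
  then show "TM (MPar P Q) X Y \<rho>" unfolding TM_def parT_def
    by (auto intro: tyM.tm_par)
qed

lemma TS_Cell: "TS (Cell S P) = cellT (TM S) (TS P)"
proof (intro ext iffI)
  fix X Y \<rho> assume "TS (Cell S P) X Y \<rho>"
  then show "cellT (TM S) (TS P) X Y \<rho>" unfolding TS_def TM_def cellT_def
    by (elim cellE) blast
next
  fix X Y \<rho> assume "cellT (TM S) (TS P) X Y \<rho>"
  then show "TS (Cell S P) X Y \<rho>" unfolding TS_def TM_def cellT_def
    by (auto intro: tyS.ts_cell)
qed

lemma TS_Nu: "TS (Nu x P) = nuT x (TS P)"
proof (intro ext iffI)
  fix X Y \<rho> assume "TS (Nu x P) X Y \<rho>"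
  then show "nuT x (TS P) X Y \<rho>" unfolding TS_def nuT_def nu0_def nuP_def
    by (elim nuE) auto
next
  fix X Y \<rho> assume "nuT x (TS P) X Y \<rho>"
  then show "TS (Nu x P) X Y \<rho>" unfolding TS_def nuT_def nu0_def nuP_def
    by (auto intro: tyS.ts_nuprot tyS.ts_nupinch tyS.ts_nufuse)
qed

lemma TS_Pinch: "TS (Pinch x P) = pT Ap x (TS P) (actS P = {})"
  by (auto simp: fun_eq_iff TS_def pT_def intro: tyS.ts_pinch elim: pinchE)
lemma TS_Fuse: "TS (Fuse x S P) = pT Af x (TS (Cell S P)) (actS (Cell S P) = {})"
  by (auto simp: fun_eq_iff TS_def pT_def intro: tyS.ts_fuse elim: fuseE)
lemma TM_CoPinch: "TM (CoPinch x S) = pT Apc x (TM S) (actM S = {})"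
  by (auto simp: fun_eq_iff TM_def pT_def intro: tyM.tm_copinch elim: copinchE)

lemma restr_Un: "restr (\<tau> \<union> \<sigma>) X = restr \<tau> X \<union> restr \<sigma> X" by (auto simp: restr_def)
lemma restr_none: "(\<And>a. a \<in> \<tau> \<Longrightarrow> actname a \<notin> X) \<Longrightarrow> restr \<tau> X = {}" by (auto simp: restr_def)
lemma restr_single: "(restr \<tau> {x} = {}) = (\<forall>a\<in>\<tau>. actname a \<noteq> x)" by (auto simp: restr_def)

lemma dualset_dualset[simp]: "dualset (dualset X) = X"
  by (simp add: dualset_def image_image)
lemma restr_dualset: "restr (dualset X) H = dualset (restr X H)"
  by (auto simp: dualset_def restr_def)
lemma restr_restr: "H' \<subseteq> H \<Longrightarrow> restr (restr X H) H' = restr X H'"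
  by (auto simp: restr_def)
lemma restr_Un2: "restr X (H1 \<union> H2) = restr X H1 \<union> restr X H2" by (auto simp: restr_def)
lemma dualset_Un: "dualset (X \<union> Y) = dualset X \<union> dualset Y" by (auto simp: dualset_def)
lemma ok_t_sym: "ok_t G \<tau> \<sigma> \<Longrightarrow> ok_t G \<sigma> \<tau>"
  unfolding ok_t_def by (metis dualset_dualset)
lemma ok_e_sym: "ok_e G1 G2 D1 D2 \<Longrightarrow> ok_e D1 D2 G1 G2" by (auto simp: ok_e_def)
lemma ok_t_sub: "ok_t H \<tau> \<sigma> \<Longrightarrow> H' \<subseteq> H \<Longrightarrow> ok_t H' \<tau> \<sigma>"
  unfolding ok_t_def by (metis restr_restr restr_dualset)
lemma ok_t_Un: "ok_t H1 \<tau> \<sigma> \<Longrightarrow> ok_t H2 \<tau> \<sigma> \<Longrightarrow> ok_t (H1 \<union> H2) \<tau> \<sigma>"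
  unfolding ok_t_def by (simp add: restr_Un2 dualset_Un)
lemma ok_t_cong: "restr \<tau> H = restr \<tau>' H \<Longrightarrow> restr \<sigma> H = restr \<sigma>' H \<Longrightarrow> ok_t H \<tau> \<sigma> \<Longrightarrow> ok_t H \<tau>' \<sigma>'"
  unfolding ok_t_def by simp
lemma ok_t_empty[simp]: "ok_t {} \<tau> \<sigma>" by (simp add: ok_t_def restr_def dualset_def)
lemma ok_e_empty[simp]: "ok_e G1 G2 {} {}" by (simp add: ok_e_def)

definition WF :: "tj \<Rightarrow> bool" where "WF T \<longleftrightarrow> (\<forall>A B \<tau>. T A B \<tau> \<longrightarrow> wf A B \<tau>)"

lemma WF_TS: "WF (TS P)" using tyS_inv unfolding WF_def TS_def by blast
lemma WF_TM: "WF (TM S)" using tyM_inv unfolding WF_def TM_def by blast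

lemma wf_names: "wf A B \<tau> \<Longrightarrow> a \<in> \<tau> \<Longrightarrow> actname a \<in> A \<union> B" unfolding wf_def by blast

lemma parT_comm1: "parT T1 T2 X Y \<rho> \<Longrightarrow> parT T2 T1 X Y \<rho>"
  unfolding parT_def
proof (elim exE conjE)
  fix G1 G D1 G2 D2 \<tau> \<sigma>
  assume h: "X = G1 \<union> D1" "Y = G2 \<union> D2 \<union> G" "\<rho> = \<tau> \<union> \<sigma>" "T1 (G1 \<union> G) G2 \<tau>" "G1 \<inter> G = {}"
    "T2 (D1 \<union> G) D2 \<sigma>" "D1 \<inter> G = {}" "ok_e G1 G2 D1 D2" "ok_t G \<tau> \<sigma>" "G1 \<inter> D1 = {}" "G2 \<inter> D2 = {}"
    "G2 \<inter> G = {}" "D2 \<inter> G = {}"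
  show "\<exists>G1 G D1 G2 D2 \<tau> \<sigma>. X = G1 \<union> D1 \<and> Y = G2 \<union> D2 \<union> G \<and> \<rho> = \<tau> \<union> \<sigma> \<and>
     T2 (G1 \<union> G) G2 \<tau> \<and> G1 \<inter> G = {} \<and> T1 (D1 \<union> G) D2 \<sigma> \<and> D1 \<inter> G = {} \<and>
     ok_e G1 G2 D1 D2 \<and> ok_t G \<tau> \<sigma> \<and>
     G1 \<inter> D1 = {} \<and> G2 \<inter> D2 = {} \<and> G2 \<inter> G = {} \<and> D2 \<inter> G = {}"
    apply (rule exI[of _ D1], rule exI[of _ G], rule exI[of _ G1], rule exI[of _ D2], rule exI[of _ G2],
        rule exI[of _ \<sigma>], rule exI[of _ \<tau>])
    apply (intro conjI)
    using h ok_t_sym[OF h(9)] ok_e_sym[OF h(8)] by (simp_all add: Un_ac Int_commute)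
qed

lemma parT_comm: "parT T1 T2 = parT T2 T1"
  by (intro ext iffI) (auto intro: parT_comm1)

lemma parT_unit: "parT T E = T"
proof (intro ext iffI)
  fix X Y \<rho> assume "parT T E X Y \<rho>" then show "T X Y \<rho>"
    unfolding parT_def E_def by auto
next
  fix X Y \<rho> assume "T X Y \<rho>" then show "parT T E X Y \<rho>"
    unfolding parT_def E_def
    by (rule_tac x=X in exI, rule_tac x="{}" in exI, rule_tac x="{}" in exI, rule_tac x=Y in exI,
      rule_tac x="{}" in exI, rule_tac x=\<rho> in exI, rule_tac x="{}" in exI) simp
qed

lemma parTE:
  assumes "parT T1 T2 X Y \<rho>"
  obtains G1 G D1 G2 D2 \<tau> \<sigma> where "X = G1 \<union> D1" "Y = G2 \<union> D2 \<union> G" "\<rho> = \<tau> \<union> \<sigma>"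
     "T1 (G1 \<union> G) G2 \<tau>" "G1 \<inter> G = {}" "T2 (D1 \<union> G) D2 \<sigma>" "D1 \<inter> G = {}"
     "ok_e G1 G2 D1 D2" "ok_t G \<tau> \<sigma>"
     "G1 \<inter> D1 = {}" "G2 \<inter> D2 = {}" "G2 \<inter> G = {}" "D2 \<inter> G = {}"
  using assms unfolding parT_def by (elim exE conjE) (rule that; assumption)

lemma parTI:
  "X = G1 \<union> D1 \<Longrightarrow> Y = G2 \<union> D2 \<union> G \<Longrightarrow> \<rho> = \<tau> \<union> \<sigma> \<Longrightarrow>
     T1 (G1 \<union> G) G2 \<tau> \<Longrightarrow> G1 \<inter> G = {} \<Longrightarrow> T2 (D1 \<union> G) D2 \<sigma> \<Longrightarrow> D1 \<inter> G = {} \<Longrightarrow>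
     ok_e G1 G2 D1 D2 \<Longrightarrow> ok_t G \<tau> \<sigma> \<Longrightarrow>
     G1 \<inter> D1 = {} \<Longrightarrow> G2 \<inter> D2 = {} \<Longrightarrow> G2 \<inter> G = {} \<Longrightarrow> D2 \<inter> G = {} \<Longrightarrow> parT T1 T2 X Y \<rho>"
  unfolding parT_def by (intro exI conjI)

lemma parT_assoc1:
  assumes W1: "WF T1" and W2: "WF T2" and W3: "WF T3"
  and a: "parT (parT T1 T2) T3 X Y \<rho>"
  shows "parT T1 (parT T2 T3) X Y \<rho>"
proof -
  obtain P1 H M1 P2 M2 \<rho>1 \<rho>2 where o: "X = P1 \<union> M1" "Y = P2 \<union> M2 \<union> H" "\<rho> = \<rho>1 \<union> \<rho>2"
    "parT T1 T2 (P1 \<union> H) P2 \<rho>1" "P1 \<inter> H = {}" "T3 (M1 \<union> H) M2 \<rho>2" "M1 \<inter> H = {}"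
    "ok_e P1 P2 M1 M2" "ok_t H \<rho>1 \<rho>2" "P1 \<inter> M1 = {}" "P2 \<inter> M2 = {}" "P2 \<inter> H = {}" "M2 \<inter> H = {}"
    using a by (rule parTE) (rule that; assumption)
  obtain K1 G L1 K2 L2 \<tau> \<sigma> where i: "P1 \<union> H = K1 \<union> L1" "P2 = K2 \<union> L2 \<union> G" "\<rho>1 = \<tau> \<union> \<sigma>"
    "T1 (K1 \<union> G) K2 \<tau>" "K1 \<inter> G = {}" "T2 (L1 \<union> G) L2 \<sigma>" "L1 \<inter> G = {}"
    "ok_e K1 K2 L1 L2" "ok_t G \<tau> \<sigma>" "K1 \<inter> L1 = {}" "K2 \<inter> L2 = {}" "K2 \<inter> G = {}" "L2 \<inter> G = {}"
    using o(4) by (rule parTE) (rule that; assumption)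
  have w1: "wf (K1 \<union> G) K2 \<tau>" using W1 i(4) unfolding WF_def by blast
  have w2: "wf (L1 \<union> G) L2 \<sigma>" using W2 i(6) unfolding WF_def by blast
  have w3: "wf (M1 \<union> H) M2 \<rho>2" using W3 o(6) unfolding WF_def by blast
  have n1: "\<And>a. a \<in> \<tau> \<Longrightarrow> actname a \<in> K1 \<union> G \<union> K2" using wf_names[OF w1] by blast
  have n2: "\<And>a. a \<in> \<sigma> \<Longrightarrow> actname a \<in> L1 \<union> G \<union> L2" using wf_names[OF w2] by blast
  have n3: "\<And>a. a \<in> \<rho>2 \<Longrightarrow> actname a \<in> M1 \<union> H \<union> M2" using wf_names[OF w3] by blast
  have d1: "(K1 \<union> G) \<inter> K2 = {}" using wf_disj[OF w1] .
  have d2: "(L1 \<union> G) \<inter> L2 = {}" using wf_disj[OF w2] .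
  have d3: "(M1 \<union> H) \<inter> M2 = {}" using wf_disj[OF w3] .
  have oe: "(P1 \<union> P2) \<inter> (M1 \<union> M2) = {}" using o(8) unfolding ok_e_def .
  have ie: "(K1 \<union> K2) \<inter> (L1 \<union> L2) = {}" using i(8) unfolding ok_e_def .
  note S = o(1,2,5,7,10,11,12,13) i(1,2,5,7,10,11,12,13) d1 d2 d3 oe ie
  define HL where "HL = H \<inter> L1"
  define HK where "HK = H \<inter> K1"
  have HS: "H \<subseteq> K1 \<union> L1" using i(1) by blast
  have f1: "((L1 - H) \<union> M1) \<union> (G \<union> HK) = ((L1 - H) \<union> G) \<union> (M1 \<union> HK)" by blast
  have f4: "T2 (((L1 - H) \<union> G) \<union> HL) L2 \<sigma>"
  proof -
    have "((L1 - H) \<union> G) \<union> HL = L1 \<union> G" unfolding HL_def by blast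
    then show ?thesis using i(6) by simp
  qed
  have f5: "((L1 - H) \<union> G) \<inter> HL = {}" unfolding HL_def using i(7) by blast
  have f6: "T3 ((M1 \<union> HK) \<union> HL) M2 \<rho>2"
  proof -
    have "(M1 \<union> HK) \<union> HL = M1 \<union> H" unfolding HL_def HK_def using HS by blast
    then show ?thesis using o(6) by simp
  qed
  have f7: "(M1 \<union> HK) \<inter> HL = {}" unfolding HL_def HK_def using o(7) i(10) by blast
  have f8: "ok_e ((L1 - H) \<union> G) L2 (M1 \<union> HK) M2" unfolding ok_e_def HK_def using i(1,2,5) o(10,11) oe ie by blast
  have f9: "ok_t HL \<sigma> \<rho>2"
  proof -
    have "ok_t HL (\<tau> \<union> \<sigma>) \<rho>2" using ok_t_sub[OF o(9)[unfolded i(3)]] unfolding HL_def by blast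
    moreover have "restr \<tau> HL = {}"
    proof (rule restr_none)
      fix a assume "a \<in> \<tau>" then have "actname a \<in> K1 \<union> G \<union> K2" by (rule n1)
      then show "actname a \<notin> HL" unfolding HL_def using i(10,7) ie by blast
    qed
    ultimately show ?thesis by (simp add: ok_t_def restr_Un)
  qed
  have f10: "((L1 - H) \<union> G) \<inter> (M1 \<union> HK) = {}" unfolding HK_def using i(1,2,5,10) o(10) oe by blast
  have f11: "L2 \<inter> M2 = {}" using i(2) o(11) by blast
  have f12: "L2 \<inter> HL = {}" unfolding HL_def using d2 by blast
  have f13: "M2 \<inter> HL = {}" unfolding HL_def using o(13) by blast
  have inner0: "parT T2 T3 (((L1 - H) \<union> G) \<union> (M1 \<union> HK)) (L2 \<union> M2 \<union> HL) (\<sigma> \<union> \<rho>2)"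
    unfolding parT_def
    apply (rule exI[of _ "(L1 - H) \<union> G"], rule exI[of _ HL], rule exI[of _ "M1 \<union> HK"],
        rule exI[of _ L2], rule exI[of _ M2], rule exI[of _ \<sigma>], rule exI[of _ \<rho>2])
    by (intro conjI refl f4 f5 f6 f7 f8 f9 f10 f11 f12 f13)
  have inner: "parT T2 T3 (((L1 - H) \<union> M1) \<union> (G \<union> HK)) (L2 \<union> M2 \<union> HL) (\<sigma> \<union> \<rho>2)"
    using inner0 by (simp only: f1)
  have ga: "X = (K1 - H) \<union> ((L1 - H) \<union> M1)" using o(1,5) i(1) by blast
  have gb: "Y = K2 \<union> (L2 \<union> M2 \<union> HL) \<union> (G \<union> HK)" unfolding HL_def HK_def using o(2) i(2) HS by blast
  have gc: "\<rho> = \<tau> \<union> (\<sigma> \<union> \<rho>2)" using o(3) i(3) by blast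
  have gd: "T1 ((K1 - H) \<union> (G \<union> HK)) K2 \<tau>"
  proof -
    have "(K1 - H) \<union> (G \<union> HK) = K1 \<union> G" unfolding HK_def by blast
    then show ?thesis using i(4) by simp
  qed
  have ge: "(K1 - H) \<inter> (G \<union> HK) = {}" unfolding HK_def using i(5) by blast
  have gg: "((L1 - H) \<union> M1) \<inter> (G \<union> HK) = {}" unfolding HK_def using i(2,7,10) o(7) oe by blast
  have gh: "ok_e (K1 - H) K2 ((L1 - H) \<union> M1) (L2 \<union> M2 \<union> HL)" unfolding ok_e_def HL_def using ie i(1,2) o(10) oe by blast
  have gi: "ok_t (G \<union> HK) \<tau> (\<sigma> \<union> \<rho>2)"
  proof (rule ok_t_Un)
    have "restr \<rho>2 G = {}"
    proof (rule restr_none)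
      fix a assume "a \<in> \<rho>2" then have "actname a \<in> M1 \<union> H \<union> M2" by (rule n3)
      then show "actname a \<notin> G" using i(2) oe o(11,12) by blast
    qed
    then show "ok_t G \<tau> (\<sigma> \<union> \<rho>2)" using i(9) by (simp add: ok_t_def restr_Un)
  next
    have "ok_t HK (\<tau> \<union> \<sigma>) \<rho>2" using ok_t_sub[OF o(9)[unfolded i(3)]] unfolding HK_def by blast
    moreover have "restr \<sigma> HK = {}"
    proof (rule restr_none)
      fix a assume "a \<in> \<sigma>" then have "actname a \<in> L1 \<union> G \<union> L2" by (rule n2)
      then show "actname a \<notin> HK" unfolding HK_def using i(10,5) ie by blast
    qed
    ultimately show "ok_t HK \<tau> (\<sigma> \<union> \<rho>2)" by (simp add: ok_t_def restr_Un)
  qed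
  have gj: "(K1 - H) \<inter> ((L1 - H) \<union> M1) = {}" using i(10,1) o(10) by blast
  have gk: "K2 \<inter> (L2 \<union> M2 \<union> HL) = {}" unfolding HL_def using ie i(2) oe o(12) by blast
  have gl: "K2 \<inter> (G \<union> HK) = {}" unfolding HK_def using i(12) d1 by blast
  have gm: "(L2 \<union> M2 \<union> HL) \<inter> (G \<union> HK) = {}" unfolding HL_def HK_def using i(13,2,7,10) ie o(11,13) by blast
  show ?thesis by (rule parTI[of X "K1 - H" "(L1 - H) \<union> M1" Y K2 "L2 \<union> M2 \<union> HL" "G \<union> HK" \<rho> \<tau> "\<sigma> \<union> \<rho>2" T1 "parT T2 T3", OF ga gb gc gd ge inner gg gh gi gj gk gl gm])
qed

lemma parT_assoc:
  assumes "WF T1" "WF T2" "WF T3"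
  shows "parT (parT T1 T2) T3 = parT T1 (parT T2 T3)"
proof (intro ext iffI)
  fix X Y \<rho> assume "parT (parT T1 T2) T3 X Y \<rho>"
  then show "parT T1 (parT T2 T3) X Y \<rho>" using parT_assoc1 assms by blast
next
  fix X Y \<rho> assume "parT T1 (parT T2 T3) X Y \<rho>"
  then have "parT (parT T3 T2) T1 X Y \<rho>" by (simp add: parT_comm)
  then have "parT T3 (parT T2 T1) X Y \<rho>" using parT_assoc1 assms by blast
  then show "parT (parT T1 T2) T3 X Y \<rho>" by (simp add: parT_comm)
qed

lemma dual_neq[simp]: "dual a \<noteq> a" by (cases a) auto
lemma dual_neq'[simp]: "a \<noteq> dual a" by (cases a) auto

lemma nuT_alt: "nuT x T = (\<lambda>A B \<tau>. nu0 x T A B \<tau> \<or> nuP x T (Ap x) A B \<tau> \<or> nuP x T (Af x) A B \<tau>)"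
  by (simp add: fun_eq_iff nuT_def)

lemma nuTI0: "nu0 x T A B \<tau> \<Longrightarrow> nuT x T A B \<tau>" by (simp add: nuT_def)
lemma nuTIp: "nuP x T (Ap x) A B \<tau> \<Longrightarrow> nuT x T A B \<tau>" by (simp add: nuT_def)
lemma nuTIf: "nuP x T (Af x) A B \<tau> \<Longrightarrow> nuT x T A B \<tau>" by (simp add: nuT_def)

lemma nu0_mono: "(\<And>A B \<tau>. T1 A B \<tau> \<Longrightarrow> T2 A B \<tau>) \<Longrightarrow> nu0 x T1 A B \<tau> \<Longrightarrow> nu0 x T2 A B \<tau>"
  unfolding nu0_def by blast
lemma nuP_mono: "(\<And>A B \<tau>. T1 A B \<tau> \<Longrightarrow> T2 A B \<tau>) \<Longrightarrow> nuP x T1 p A B \<tau> \<Longrightarrow> nuP x T2 p A B \<tau>"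
  unfolding nuP_def by blast

lemma nuT_E: "E = nuT n E"
  by (auto simp: fun_eq_iff nuT_def nu0_def nuP_def E_def restr_def)

lemma nn00: "n \<noteq> m \<Longrightarrow> nu0 n (nu0 m T) A B \<tau> \<Longrightarrow> nu0 m (nu0 n T) A B \<tau>"
proof -
  assume nm: "n \<noteq> m" and a: "nu0 n (nu0 m T) A B \<tau>"
  obtain B1 B2 where h: "B = B1 - {n}" "B1 = B2 - {m}" "T A B2 \<tau>" "m \<notin> A" "restr \<tau> {m} = {}"
    "n \<notin> A" "restr \<tau> {n} = {}"
    using a unfolding nu0_def by blast
  have "nu0 n T A (B2 - {n}) \<tau>" unfolding nu0_def using h by blast
  moreover have "B = (B2 - {n}) - {m}" using h(1,2) by blast
  ultimately show ?thesis unfolding nu0_def using h by blast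
qed

lemma nn0P: assumes "n \<noteq> m" "actname p = m" "nu0 n (nuP m T p) A B \<tau>" shows "nuP m (nu0 n T) p A B \<tau>"
proof -
  obtain B1 where h: "B = B1 - {n}" "T A (insert m B1) (\<tau> \<union> {p, dual p})" "m \<notin> B1"
    "{p, dual p} \<inter> \<tau> = {}" "n \<notin> A" "restr \<tau> {n} = {}"
    using assms(3) unfolding nu0_def nuP_def by blast
  have "nu0 n T A (insert m B) (\<tau> \<union> {p, dual p})" unfolding nu0_def
    apply (rule exI[of _ "insert m B1"])
    using h assms(1,2) by (auto simp: restr_single)
  then show ?thesis unfolding nuP_def using h by blast
qed

lemma nnP0: assumes "n \<noteq> m" "actname p = n" "nuP n (nu0 m T) p A B \<tau>" shows "nu0 m (nuP n T p) A B \<tau>"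
proof -
  obtain B1 where h: "insert n B = B1 - {m}" "T A B1 (\<tau> \<union> {p, dual p})" "m \<notin> A"
    "restr (\<tau> \<union> {p, dual p}) {m} = {}" "n \<notin> B" "{p, dual p} \<inter> \<tau> = {}"
    using assms(3) unfolding nu0_def nuP_def by blast
  have i: "insert n (B1 - {n}) = B1" using h(1) by blast
  have "nuP n T p A (B1 - {n}) \<tau>" unfolding nuP_def using h i by simp
  moreover have "B = (B1 - {n}) - {m}" using h(1,5) by blast
  moreover have "restr \<tau> {m} = {}" using h(4) by (auto simp: restr_def)
  ultimately show ?thesis unfolding nu0_def using h(3) by blast
qed

lemma nnPP: assumes "n \<noteq> m" "actname p = n" "actname q = m" "nuP n (nuP m T q) p A B \<tau>"
  shows "nuP m (nuP n T p) q A B \<tau>"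
proof -
  have h: "T A (insert m (insert n B)) ((\<tau> \<union> {p, dual p}) \<union> {q, dual q})" "m \<notin> insert n B"
    "{q, dual q} \<inter> (\<tau> \<union> {p, dual p}) = {}" "n \<notin> B" "{p, dual p} \<inter> \<tau> = {}"
    using assms(4) unfolding nuP_def by blast+
  have e1: "insert n (insert m B) = insert m (insert n B)" by blast
  have e2: "(\<tau> \<union> {q, dual q}) \<union> {p, dual p} = (\<tau> \<union> {p, dual p}) \<union> {q, dual q}" by blast
  have d: "{p, dual p} \<inter> (\<tau> \<union> {q, dual q}) = {}"
  proof -
    have "p \<noteq> q" "p \<noteq> dual q" "dual p \<noteq> q" "dual p \<noteq> dual q" using assms(1,2,3)
      by (metis actname_dual)+
    then show ?thesis using h(5) by blast
  qed
  have "nuP n T p A (insert m B) (\<tau> \<union> {q, dual q})" unfolding nuP_def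
    using h(1) d assms(1) h(4) unfolding e1 e2 by blast
  then show ?thesis unfolding nuP_def using h by blast
qed

lemma nuT_nuT1: assumes "n \<noteq> m" "nuT n (nuT m T) A B \<tau>" shows "nuT m (nuT n T) A B \<tau>"
proof -
  have m1: "\<And>A B \<tau>. nu0 n T A B \<tau> \<Longrightarrow> nuT n T A B \<tau>" "\<And>A B \<tau>. nuP n T (Ap n) A B \<tau> \<Longrightarrow> nuT n T A B \<tau>"
    "\<And>A B \<tau>. nuP n T (Af n) A B \<tau> \<Longrightarrow> nuT n T A B \<tau>" by (simp_all add: nuT_def)
  have s0: "nu0 n (nuT m T) A B \<tau> \<Longrightarrow> nu0 n (nu0 m T) A B \<tau> \<or> nu0 n (nuP m T (Ap m)) A B \<tau> \<or> nu0 n (nuP m T (Af m)) A B \<tau>"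
    unfolding nu0_def nuT_def by blast
  have sP: "\<And>p. nuP n (nuT m T) p A B \<tau> \<Longrightarrow> nuP n (nu0 m T) p A B \<tau> \<or> nuP n (nuP m T (Ap m)) p A B \<tau> \<or> nuP n (nuP m T (Af m)) p A B \<tau>"
    unfolding nuP_def nuT_def by blast
  from assms(2) consider "nu0 n (nuT m T) A B \<tau>" | "nuP n (nuT m T) (Ap n) A B \<tau>" | "nuP n (nuT m T) (Af n) A B \<tau>"
    unfolding nuT_def by blast
  then show ?thesis
  proof cases
    case 1
    from s0[OF 1] show ?thesis
    proof (elim disjE)
      assume "nu0 n (nu0 m T) A B \<tau>"
      then have "nu0 m (nu0 n T) A B \<tau>" using nn00 assms(1) by blast
      then show ?thesis by (intro nuTI0) (rule nu0_mono[OF m1(1)])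
    next
      assume "nu0 n (nuP m T (Ap m)) A B \<tau>"
      then have "nuP m (nu0 n T) (Ap m) A B \<tau>" using nn0P assms(1) by simp
      then show ?thesis by (intro nuTIp) (rule nuP_mono[OF m1(1)])
    next
      assume "nu0 n (nuP m T (Af m)) A B \<tau>"
      then have "nuP m (nu0 n T) (Af m) A B \<tau>" using nn0P assms(1) by simp
      then show ?thesis by (intro nuTIf) (rule nuP_mono[OF m1(1)])
    qed
  next
    case 2
    from sP[OF 2] show ?thesis
    proof (elim disjE)
      assume "nuP n (nu0 m T) (Ap n) A B \<tau>"
      then have "nu0 m (nuP n T (Ap n)) A B \<tau>" using nnP0 assms(1) by simp
      then show ?thesis by (intro nuTI0) (rule nu0_mono[OF m1(2)])
    next
      assume "nuP n (nuP m T (Ap m)) (Ap n) A B \<tau>"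
      then have "nuP m (nuP n T (Ap n)) (Ap m) A B \<tau>" using nnPP assms(1) by simp
      then show ?thesis by (intro nuTIp) (rule nuP_mono[OF m1(2)])
    next
      assume "nuP n (nuP m T (Af m)) (Ap n) A B \<tau>"
      then have "nuP m (nuP n T (Ap n)) (Af m) A B \<tau>" using nnPP assms(1) by simp
      then show ?thesis by (intro nuTIf) (rule nuP_mono[OF m1(2)])
    qed
  next
    case 3
    from sP[OF 3] show ?thesis
    proof (elim disjE)
      assume "nuP n (nu0 m T) (Af n) A B \<tau>"
      then have "nu0 m (nuP n T (Af n)) A B \<tau>" using nnP0 assms(1) by simp
      then show ?thesis by (intro nuTI0) (rule nu0_mono[OF m1(3)])
    next
      assume "nuP n (nuP m T (Ap m)) (Af n) A B \<tau>"
      then have "nuP m (nuP n T (Af n)) (Ap m) A B \<tau>" using nnPP assms(1) by simp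
      then show ?thesis by (intro nuTIp) (rule nuP_mono[OF m1(3)])
    next
      assume "nuP n (nuP m T (Af m)) (Af n) A B \<tau>"
      then have "nuP m (nuP n T (Af n)) (Af m) A B \<tau>" using nnPP assms(1) by simp
      then show ?thesis by (intro nuTIf) (rule nuP_mono[OF m1(3)])
    qed
  qed
qed

lemma nuT_nuT: "n \<noteq> m \<Longrightarrow> nuT n (nuT m T) = nuT m (nuT n T)"
  by (intro ext iffI) (auto intro: nuT_nuT1)

definition NF :: "name \<Rightarrow> tj \<Rightarrow> bool" where
  "NF n T \<longleftrightarrow> (\<forall>A B \<sigma>. T A B \<sigma> \<longrightarrow> n \<notin> A \<and> n \<notin> B \<and> (\<forall>a\<in>\<sigma>. actname a \<noteq> n))"

lemma NFD: "NF n T \<Longrightarrow> T A B \<sigma> \<Longrightarrow> n \<notin> A \<and> n \<notin> B \<and> (\<forall>a\<in>\<sigma>. actname a \<noteq> n)"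
  unfolding NF_def by blast

lemma parT_mono: assumes "\<And>A B \<tau>. P A B \<tau> \<Longrightarrow> P' A B \<tau>" "parT P T2 X Y \<rho>" shows "parT P' T2 X Y \<rho>"
  using assms(2) apply (rule parTE) apply (rule parTI) apply (assumption)+ apply (rule assms(1), assumption)
  apply assumption+ done

lemma parT_or: assumes "parT (\<lambda>A B \<tau>. P A B \<tau> \<or> Q A B \<tau>) T2 X Y \<rho>" shows "parT P T2 X Y \<rho> \<or> parT Q T2 X Y \<rho>"
  using assms apply (rule parTE) apply (erule disjE)
   apply (rule disjI1, rule parTI, assumption+)
  apply (rule disjI2, rule parTI, assumption+) done

lemma cellTE:
  assumes "cellT T1 T2 X Y \<rho>"
  obtains G G2 D2 \<tau> \<sigma> where "Y = G2 \<union> D2 \<union> G" "\<rho> = \<tau> \<union> \<sigma>"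
     "T1 (X \<union> G) G2 \<tau>" "X \<inter> G = {}" "T2 G D2 \<sigma>"
     "ok_e X G2 {} D2" "ok_t G \<tau> \<sigma>" "G2 \<inter> D2 = {}" "G2 \<inter> G = {}" "D2 \<inter> G = {}"
  using assms unfolding cellT_def by (elim exE conjE) (rule that; assumption)

lemma cellTI: "Y = G2 \<union> D2 \<union> G \<Longrightarrow> \<rho> = \<tau> \<union> \<sigma> \<Longrightarrow>
     T1 (X \<union> G) G2 \<tau> \<Longrightarrow> X \<inter> G = {} \<Longrightarrow> T2 G D2 \<sigma> \<Longrightarrow>
     ok_e X G2 {} D2 \<Longrightarrow> ok_t G \<tau> \<sigma> \<Longrightarrow> G2 \<inter> D2 = {} \<Longrightarrow> G2 \<inter> G = {} \<Longrightarrow> D2 \<inter> G = {} \<Longrightarrow>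
     cellT T1 T2 X Y \<rho>"
  unfolding cellT_def by (intro exI conjI)

lemma cellT_mono: assumes "\<And>A B \<tau>. P A B \<tau> \<Longrightarrow> P' A B \<tau>" "cellT T1 P X Y \<rho>" shows "cellT T1 P' X Y \<rho>"
  using assms(2) apply (rule cellTE) apply (rule cellTI) apply (assumption)+ apply (rule assms(1), assumption)
  apply assumption+ done

lemma cellT_or: assumes "cellT T1 (\<lambda>A B \<tau>. P A B \<tau> \<or> Q A B \<tau>) X Y \<rho>" shows "cellT T1 P X Y \<rho> \<or> cellT T1 Q X Y \<rho>"
  using assms apply (rule cellTE) apply (erule disjE)
   apply (rule disjI1, rule cellTI, assumption+)
  apply (rule disjI2, rule cellTI, assumption+) done

lemma L1: assumes nf: "NF n T2" and a: "nu0 n (parT T1 T2) X Y \<rho>" shows "parT (nu0 n T1) T2 X Y \<rho>"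
proof -
  obtain B' where h: "Y = B' - {n}" "parT T1 T2 X B' \<rho>" "n \<notin> X" "restr \<rho> {n} = {}"
    using a unfolding nu0_def by blast
  obtain G1 G D1 G2 D2 \<tau> \<sigma> where p: "X = G1 \<union> D1" "B' = G2 \<union> D2 \<union> G" "\<rho> = \<tau> \<union> \<sigma>"
     "T1 (G1 \<union> G) G2 \<tau>" "G1 \<inter> G = {}" "T2 (D1 \<union> G) D2 \<sigma>" "D1 \<inter> G = {}"
     "ok_e G1 G2 D1 D2" "ok_t G \<tau> \<sigma>"
     "G1 \<inter> D1 = {}" "G2 \<inter> D2 = {}" "G2 \<inter> G = {}" "D2 \<inter> G = {}"
    using h(2) by (rule parTE) (rule that; assumption)
  have q: "n \<notin> D1 \<union> G" "n \<notin> D2" using NFD[OF nf p(6)] by auto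
  have r: "nu0 n T1 (G1 \<union> G) (G2 - {n}) \<tau>" unfolding nu0_def
    using p(4) h(3,4) q p(1,3) by (auto simp: restr_def)
  show ?thesis
    by (rule parTI[of X G1 D1 Y "G2 - {n}" D2 G \<rho> \<tau> \<sigma> "nu0 n T1" T2, OF p(1) _ p(3) r p(5,6,7) _ p(9,10) _ _ p(13)])
       (use h(1) p(2) q p(8,11,12) in \<open>auto simp: ok_e_def\<close>)
qed

lemma L2: assumes nf: "NF n T2" and a: "parT (nu0 n T1) T2 X Y \<rho>" shows "nu0 n (parT T1 T2) X Y \<rho>"
proof -
  obtain G1 G D1 G2 D2 \<tau> \<sigma> where p: "X = G1 \<union> D1" "Y = G2 \<union> D2 \<union> G" "\<rho> = \<tau> \<union> \<sigma>"
     "nu0 n T1 (G1 \<union> G) G2 \<tau>" "G1 \<inter> G = {}" "T2 (D1 \<union> G) D2 \<sigma>" "D1 \<inter> G = {}"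
     "ok_e G1 G2 D1 D2" "ok_t G \<tau> \<sigma>"
     "G1 \<inter> D1 = {}" "G2 \<inter> D2 = {}" "G2 \<inter> G = {}" "D2 \<inter> G = {}"
    using a by (rule parTE) (rule that; assumption)
  obtain G2' where h: "G2 = G2' - {n}" "T1 (G1 \<union> G) G2' \<tau>" "n \<notin> G1 \<union> G" "restr \<tau> {n} = {}"
    using p(4) unfolding nu0_def by blast
  have q: "n \<notin> D1 \<union> G" "n \<notin> D2" "\<forall>a\<in>\<sigma>. actname a \<noteq> n" using NFD[OF nf p(6)] by auto
  have pp: "parT T1 T2 X (G2' \<union> D2 \<union> G) \<rho>"
    by (rule parTI[of X G1 D1 "G2' \<union> D2 \<union> G" G2' D2 G \<rho> \<tau> \<sigma> T1 T2, OF p(1) refl p(3) h(2) p(5,6,7) _ p(9,10) _ _ p(13)])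
       (use h(1) q p(8,11,12) in \<open>auto simp: ok_e_def\<close>)
  show ?thesis unfolding nu0_def
    apply (rule exI[of _ "G2' \<union> D2 \<union> G"])
    using pp p(1,2,3) h q by (auto simp: restr_def)
qed

lemma L3: assumes nf: "NF n T2" and pn: "actname p = n" and a: "nuP n (parT T1 T2) p X Y \<rho>"
  shows "parT (nuP n T1 p) T2 X Y \<rho>"
proof -
  have h: "parT T1 T2 X (insert n Y) (\<rho> \<union> {p, dual p})" "n \<notin> Y" "{p, dual p} \<inter> \<rho> = {}"
    using a unfolding nuP_def by blast+
  obtain G1 G D1 G2 D2 \<tau> \<sigma> where p: "X = G1 \<union> D1" "insert n Y = G2 \<union> D2 \<union> G" "\<rho> \<union> {p, dual p} = \<tau> \<union> \<sigma>"
     "T1 (G1 \<union> G) G2 \<tau>" "G1 \<inter> G = {}" "T2 (D1 \<union> G) D2 \<sigma>" "D1 \<inter> G = {}"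
     "ok_e G1 G2 D1 D2" "ok_t G \<tau> \<sigma>"
     "G1 \<inter> D1 = {}" "G2 \<inter> D2 = {}" "G2 \<inter> G = {}" "D2 \<inter> G = {}"
    using h(1) by (rule parTE) (rule that; assumption)
  have q: "n \<notin> D1 \<union> G" "n \<notin> D2" "\<forall>a\<in>\<sigma>. actname a \<noteq> n" using NFD[OF nf p(6)] by auto
  have ps: "p \<notin> \<sigma>" "dual p \<notin> \<sigma>" using q(3) pn by auto
  have pt: "{p, dual p} \<subseteq> \<tau>" using p(3) ps by blast
  have nG2: "n \<in> G2" using p(2) q by blast
  have r: "nuP n T1 p (G1 \<union> G) (G2 - {n}) (\<tau> - {p, dual p})" unfolding nuP_def
  proof (intro conjI)
    have "insert n (G2 - {n}) = G2" "(\<tau> - {p, dual p}) \<union> {p, dual p} = \<tau>" using nG2 pt by blast+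
    then show "T1 (G1 \<union> G) (insert n (G2 - {n})) (\<tau> - {p, dual p} \<union> {p, dual p})" using p(4) by simp
  qed auto
  have ot: "ok_t G (\<tau> - {p, dual p}) \<sigma>"
  proof -
    have "restr (\<tau> - {p, dual p}) G = restr \<tau> G" using q(1) pn by (auto simp: restr_def)
    then show ?thesis using p(9) by (simp add: ok_t_def)
  qed
  have rho: "\<rho> = (\<tau> - {p, dual p}) \<union> \<sigma>" using p(3) h(3) ps by blast
  show ?thesis
    by (rule parTI[of X G1 D1 Y "G2 - {n}" D2 G \<rho> "\<tau> - {p, dual p}" \<sigma> "nuP n T1 p" T2, OF p(1) _ rho r p(5,6,7) _ ot p(10) _ _ p(13)])
       (use h(2) p(2) q p(8,11,12) in \<open>auto simp: ok_e_def\<close>)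
qed

lemma L4: assumes nf: "NF n T2" and pn: "actname p = n" and a: "parT (nuP n T1 p) T2 X Y \<rho>"
  shows "nuP n (parT T1 T2) p X Y \<rho>"
proof -
  obtain G1 G D1 G2 D2 \<tau> \<sigma> where p: "X = G1 \<union> D1" "Y = G2 \<union> D2 \<union> G" "\<rho> = \<tau> \<union> \<sigma>"
     "nuP n T1 p (G1 \<union> G) G2 \<tau>" "G1 \<inter> G = {}" "T2 (D1 \<union> G) D2 \<sigma>" "D1 \<inter> G = {}"
     "ok_e G1 G2 D1 D2" "ok_t G \<tau> \<sigma>"
     "G1 \<inter> D1 = {}" "G2 \<inter> D2 = {}" "G2 \<inter> G = {}" "D2 \<inter> G = {}"
    using a by (rule parTE) (rule that; assumption)
  have h: "T1 (G1 \<union> G) (insert n G2) (\<tau> \<union> {p, dual p})" "n \<notin> G2" "{p, dual p} \<inter> \<tau> = {}"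
    using p(4) unfolding nuP_def by blast+
  have q: "n \<notin> D1 \<union> G" "n \<notin> D2" "\<forall>a\<in>\<sigma>. actname a \<noteq> n" using NFD[OF nf p(6)] by auto
  have ps: "p \<notin> \<sigma>" "dual p \<notin> \<sigma>" using q(3) pn by auto
  have ot: "ok_t G (\<tau> \<union> {p, dual p}) \<sigma>"
  proof -
    have "restr (\<tau> \<union> {p, dual p}) G = restr \<tau> G" using q(1) pn by (auto simp: restr_def)
    then show ?thesis using p(9) by (simp add: ok_t_def)
  qed
  have pp: "parT T1 T2 X (insert n Y) (\<rho> \<union> {p, dual p})"
    by (rule parTI[of X G1 D1 "insert n Y" "insert n G2" D2 G "\<rho> \<union> {p, dual p}" "\<tau> \<union> {p, dual p}" \<sigma> T1 T2, OF p(1) _ _ h(1) p(5,6,7) _ ot p(10) _ _ p(13)])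
       (use p(2,3) q p(8,11,12) in \<open>auto simp: ok_e_def\<close>)
  show ?thesis unfolding nuP_def using pp p(2,3) h q ps by auto
qed

lemma nuT_parT: assumes nf: "NF n T2" shows "nuT n (parT T1 T2) = parT (nuT n T1) T2"
proof (intro ext iffI)
  fix X Y \<rho> assume "nuT n (parT T1 T2) X Y \<rho>"
  then consider "nu0 n (parT T1 T2) X Y \<rho>" | "nuP n (parT T1 T2) (Ap n) X Y \<rho>" | "nuP n (parT T1 T2) (Af n) X Y \<rho>"
    unfolding nuT_def by blast
  then show "parT (nuT n T1) T2 X Y \<rho>"
  proof cases
    case 1 show ?thesis using L1[OF nf 1] by (rule parT_mono[rotated]) (erule nuTI0)
  next
    case 2 have "parT (nuP n T1 (Ap n)) T2 X Y \<rho>" using L3[OF nf _ 2] by simp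
    then show ?thesis by (rule parT_mono[rotated]) (erule nuTIp)
  next
    case 3 have "parT (nuP n T1 (Af n)) T2 X Y \<rho>" using L3[OF nf _ 3] by simp
    then show ?thesis by (rule parT_mono[rotated]) (erule nuTIf)
  qed
next
  fix X Y \<rho> assume "parT (nuT n T1) T2 X Y \<rho>"
  then have "parT (\<lambda>A B \<tau>. nu0 n T1 A B \<tau> \<or> (nuP n T1 (Ap n) A B \<tau> \<or> nuP n T1 (Af n) A B \<tau>)) T2 X Y \<rho>"
    by (simp add: nuT_alt)
  then have "parT (nu0 n T1) T2 X Y \<rho> \<or> parT (\<lambda>A B \<tau>. nuP n T1 (Ap n) A B \<tau> \<or> nuP n T1 (Af n) A B \<tau>) T2 X Y \<rho>"
    by (rule parT_or)
  then show "nuT n (parT T1 T2) X Y \<rho>"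
  proof
    assume "parT (nu0 n T1) T2 X Y \<rho>" then show ?thesis by (intro nuTI0 L2[OF nf])
  next
    assume "parT (\<lambda>A B \<tau>. nuP n T1 (Ap n) A B \<tau> \<or> nuP n T1 (Af n) A B \<tau>) T2 X Y \<rho>"
    then have "parT (nuP n T1 (Ap n)) T2 X Y \<rho> \<or> parT (nuP n T1 (Af n)) T2 X Y \<rho>" by (rule parT_or)
    then show ?thesis
    proof
      assume "parT (nuP n T1 (Ap n)) T2 X Y \<rho>" then show ?thesis by (intro nuTIp L4[OF nf]) simp_all
    next
      assume "parT (nuP n T1 (Af n)) T2 X Y \<rho>" then show ?thesis by (intro nuTIf L4[OF nf]) simp_all
    qed
  qed
qed

lemma C1: assumes nf: "NF n T1" and a: "nu0 n (cellT T1 T2) X Y \<rho>" shows "cellT T1 (nu0 n T2) X Y \<rho>"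
proof -
  obtain B' where h: "Y = B' - {n}" "cellT T1 T2 X B' \<rho>" "n \<notin> X" "restr \<rho> {n} = {}"
    using a unfolding nu0_def by blast
  obtain G G2 D2 \<tau> \<sigma> where p: "B' = G2 \<union> D2 \<union> G" "\<rho> = \<tau> \<union> \<sigma>"
     "T1 (X \<union> G) G2 \<tau>" "X \<inter> G = {}" "T2 G D2 \<sigma>"
     "ok_e X G2 {} D2" "ok_t G \<tau> \<sigma>" "G2 \<inter> D2 = {}" "G2 \<inter> G = {}" "D2 \<inter> G = {}"
    using h(2) by (rule cellTE) (rule that; assumption)
  have q: "n \<notin> X \<union> G" "n \<notin> G2" using NFD[OF nf p(3)] by auto
  have r: "nu0 n T2 G (D2 - {n}) \<sigma>" unfolding nu0_def
    using p(5,2) h(4) q by (auto simp: restr_def)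
  show ?thesis
    by (rule cellTI[of Y G2 "D2 - {n}" G \<rho> \<tau> \<sigma> T1 X "nu0 n T2", OF _ p(2,3,4) r _ p(7) _ p(9) _])
       (use h(1) p(1,6,8,10) q in \<open>auto simp: ok_e_def\<close>)
qed

lemma C2: assumes nf: "NF n T1" and a: "cellT T1 (nu0 n T2) X Y \<rho>" shows "nu0 n (cellT T1 T2) X Y \<rho>"
proof -
  obtain G G2 D2 \<tau> \<sigma> where p: "Y = G2 \<union> D2 \<union> G" "\<rho> = \<tau> \<union> \<sigma>"
     "T1 (X \<union> G) G2 \<tau>" "X \<inter> G = {}" "nu0 n T2 G D2 \<sigma>"
     "ok_e X G2 {} D2" "ok_t G \<tau> \<sigma>" "G2 \<inter> D2 = {}" "G2 \<inter> G = {}" "D2 \<inter> G = {}"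
    using a by (rule cellTE) (rule that; assumption)
  obtain D2' where h: "D2 = D2' - {n}" "T2 G D2' \<sigma>" "n \<notin> G" "restr \<sigma> {n} = {}"
    using p(5) unfolding nu0_def by blast
  have q: "n \<notin> X \<union> G" "n \<notin> G2" "\<forall>a\<in>\<tau>. actname a \<noteq> n" using NFD[OF nf p(3)] by auto
  have cc: "cellT T1 T2 X (G2 \<union> D2' \<union> G) \<rho>"
    by (rule cellTI[of "G2 \<union> D2' \<union> G" G2 D2' G \<rho> \<tau> \<sigma> T1 X T2, OF refl p(2,3,4) h(2) _ p(7) _ p(9) _])
       (use h(1,3) p(6,8,10) q in \<open>auto simp: ok_e_def\<close>)
  show ?thesis unfolding nu0_def
    apply (rule exI[of _ "G2 \<union> D2' \<union> G"])
    using cc p(1,2) h q by (auto simp: restr_def)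
qed

lemma C3: assumes nf: "NF n T1" and pn: "actname p = n" and a: "nuP n (cellT T1 T2) p X Y \<rho>"
  shows "cellT T1 (nuP n T2 p) X Y \<rho>"
proof -
  have h: "cellT T1 T2 X (insert n Y) (\<rho> \<union> {p, dual p})" "n \<notin> Y" "{p, dual p} \<inter> \<rho> = {}"
    using a unfolding nuP_def by blast+
  obtain G G2 D2 \<tau> \<sigma> where p: "insert n Y = G2 \<union> D2 \<union> G" "\<rho> \<union> {p, dual p} = \<tau> \<union> \<sigma>"
     "T1 (X \<union> G) G2 \<tau>" "X \<inter> G = {}" "T2 G D2 \<sigma>"
     "ok_e X G2 {} D2" "ok_t G \<tau> \<sigma>" "G2 \<inter> D2 = {}" "G2 \<inter> G = {}" "D2 \<inter> G = {}"
    using h(1) by (rule cellTE) (rule that; assumption)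
  have q: "n \<notin> X \<union> G" "n \<notin> G2" "\<forall>a\<in>\<tau>. actname a \<noteq> n" using NFD[OF nf p(3)] by auto
  have ps: "p \<notin> \<tau>" "dual p \<notin> \<tau>" using q(3) pn by auto
  have pt: "{p, dual p} \<subseteq> \<sigma>" using p(2) ps by blast
  have nD2: "n \<in> D2" using p(1) q by blast
  have r: "nuP n T2 p G (D2 - {n}) (\<sigma> - {p, dual p})" unfolding nuP_def
  proof (intro conjI)
    have "insert n (D2 - {n}) = D2" "(\<sigma> - {p, dual p}) \<union> {p, dual p} = \<sigma>" using nD2 pt by blast+
    then show "T2 G (insert n (D2 - {n})) (\<sigma> - {p, dual p} \<union> {p, dual p})" using p(5) by simp
  qed auto
  have ot: "ok_t G \<tau> (\<sigma> - {p, dual p})"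
  proof -
    have "restr (\<sigma> - {p, dual p}) G = restr \<sigma> G" using q(1) pn by (auto simp: restr_def)
    then show ?thesis using p(7) by (simp add: ok_t_def)
  qed
  have rho: "\<rho> = \<tau> \<union> (\<sigma> - {p, dual p})" using p(2) h(3) ps by blast
  show ?thesis
    by (rule cellTI[of Y G2 "D2 - {n}" G \<rho> \<tau> "\<sigma> - {p, dual p}" T1 X "nuP n T2 p", OF _ rho p(3,4) r _ ot _ p(9) _])
       (use h(2) p(1,6,8,10) q in \<open>auto simp: ok_e_def\<close>)
qed

lemma C4: assumes nf: "NF n T1" and pn: "actname p = n" and a: "cellT T1 (nuP n T2 p) X Y \<rho>"
  shows "nuP n (cellT T1 T2) p X Y \<rho>"
proof -
  obtain G G2 D2 \<tau> \<sigma> where p: "Y = G2 \<union> D2 \<union> G" "\<rho> = \<tau> \<union> \<sigma>"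
     "T1 (X \<union> G) G2 \<tau>" "X \<inter> G = {}" "nuP n T2 p G D2 \<sigma>"
     "ok_e X G2 {} D2" "ok_t G \<tau> \<sigma>" "G2 \<inter> D2 = {}" "G2 \<inter> G = {}" "D2 \<inter> G = {}"
    using a by (rule cellTE) (rule that; assumption)
  have h: "T2 G (insert n D2) (\<sigma> \<union> {p, dual p})" "n \<notin> D2" "{p, dual p} \<inter> \<sigma> = {}"
    using p(5) unfolding nuP_def by blast+
  have q: "n \<notin> X \<union> G" "n \<notin> G2" "\<forall>a\<in>\<tau>. actname a \<noteq> n" using NFD[OF nf p(3)] by auto
  have ps: "p \<notin> \<tau>" "dual p \<notin> \<tau>" using q(3) pn by auto
  have ot: "ok_t G \<tau> (\<sigma> \<union> {p, dual p})"
  proof -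
    have "restr (\<sigma> \<union> {p, dual p}) G = restr \<sigma> G" using q(1) pn by (auto simp: restr_def)
    then show ?thesis using p(7) by (simp add: ok_t_def)
  qed
  have cc: "cellT T1 T2 X (insert n Y) (\<rho> \<union> {p, dual p})"
    by (rule cellTI[of "insert n Y" G2 "insert n D2" G "\<rho> \<union> {p, dual p}" \<tau> "\<sigma> \<union> {p, dual p}" T1 X T2, OF _ _ p(3,4) h(1) _ ot _ p(9) _])
       (use p(1,2,6,8,10) q in \<open>auto simp: ok_e_def\<close>)
  show ?thesis unfolding nuP_def using cc p(1,2) h q ps by auto
qed

lemma nuT_cellT: assumes nf: "NF n T1" shows "nuT n (cellT T1 T2) = cellT T1 (nuT n T2)"
proof (intro ext iffI)
  fix X Y \<rho> assume "nuT n (cellT T1 T2) X Y \<rho>"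
  then consider "nu0 n (cellT T1 T2) X Y \<rho>" | "nuP n (cellT T1 T2) (Ap n) X Y \<rho>" | "nuP n (cellT T1 T2) (Af n) X Y \<rho>"
    unfolding nuT_def by blast
  then show "cellT T1 (nuT n T2) X Y \<rho>"
  proof cases
    case 1 show ?thesis using C1[OF nf 1] by (rule cellT_mono[rotated]) (erule nuTI0)
  next
    case 2 have "cellT T1 (nuP n T2 (Ap n)) X Y \<rho>" using C3[OF nf _ 2] by simp
    then show ?thesis by (rule cellT_mono[rotated]) (erule nuTIp)
  next
    case 3 have "cellT T1 (nuP n T2 (Af n)) X Y \<rho>" using C3[OF nf _ 3] by simp
    then show ?thesis by (rule cellT_mono[rotated]) (erule nuTIf)
  qed
next
  fix X Y \<rho> assume "cellT T1 (nuT n T2) X Y \<rho>"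
  then have "cellT T1 (\<lambda>A B \<tau>. nu0 n T2 A B \<tau> \<or> (nuP n T2 (Ap n) A B \<tau> \<or> nuP n T2 (Af n) A B \<tau>)) X Y \<rho>"
    by (simp add: nuT_alt)
  then have "cellT T1 (nu0 n T2) X Y \<rho> \<or> cellT T1 (\<lambda>A B \<tau>. nuP n T2 (Ap n) A B \<tau> \<or> nuP n T2 (Af n) A B \<tau>) X Y \<rho>"
    by (rule cellT_or)
  then show "nuT n (cellT T1 T2) X Y \<rho>"
  proof
    assume "cellT T1 (nu0 n T2) X Y \<rho>" then show ?thesis by (intro nuTI0 C2[OF nf])
  next
    assume "cellT T1 (\<lambda>A B \<tau>. nuP n T2 (Ap n) A B \<tau> \<or> nuP n T2 (Af n) A B \<tau>) X Y \<rho>"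
    then have "cellT T1 (nuP n T2 (Ap n)) X Y \<rho> \<or> cellT T1 (nuP n T2 (Af n)) X Y \<rho>" by (rule cellT_or)
    then show ?thesis
    proof
      assume "cellT T1 (nuP n T2 (Ap n)) X Y \<rho>" then show ?thesis by (intro nuTIp C4[OF nf]) simp_all
    next
      assume "cellT T1 (nuP n T2 (Af n)) X Y \<rho>" then show ?thesis by (intro nuTIf C4[OF nf]) simp_all
    qed
  qed
qed

lemma nuT_pT: assumes nm: "n \<noteq> m" and cm: "actname (c m) = m" and ee: "\<And>A B \<tau>. T A B \<tau> \<Longrightarrow> e \<Longrightarrow> \<tau> = {}"
  shows "nuT n (pT c m T e) = pT c m (nuT n T) e"
proof (intro ext iffI)
  fix X Y \<rho> assume "nuT n (pT c m T e) X Y \<rho>"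
  then consider "nu0 n (pT c m T e) X Y \<rho>" | "\<exists>p. nuP n (pT c m T e) p X Y \<rho>"
    unfolding nuT_def by blast
  then show "pT c m (nuT n T) e X Y \<rho>"
  proof cases
    case 1
    then obtain B' G1 where h: "Y = B' - {n}" "X = insert m G1" "\<rho> = {c m}" "T G1 B' {}" e "m \<notin> G1" "m \<notin> B'"
       "n \<notin> X" "restr \<rho> {n} = {}" unfolding nu0_def pT_def by blast
    have "nu0 n T G1 Y {}" unfolding nu0_def using h by (auto simp: restr_def)
    then have "nuT n T G1 Y {}" by (rule nuTI0)
    then show ?thesis unfolding pT_def using h by blast
  next
    case 2
    then obtain p where "pT c m T e X (insert n Y) (\<rho> \<union> {p, dual p})" unfolding nuP_def by blast
    then have "\<rho> \<union> {p, dual p} = {c m}" unfolding pT_def by blast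
    then have "p = c m" "dual p = c m" by blast+
    then show ?thesis by simp
  qed
next
  fix X Y \<rho> assume "pT c m (nuT n T) e X Y \<rho>"
  then obtain G1 where h: "X = insert m G1" "\<rho> = {c m}" "nuT n T G1 Y {}" e "m \<notin> G1" "m \<notin> Y"
    unfolding pT_def by blast
  from h(3) consider "nu0 n T G1 Y {}" | "\<exists>p. nuP n T p G1 Y {}" unfolding nuT_def by blast
  then show "nuT n (pT c m T e) X Y \<rho>"
  proof cases
    case 1
    then obtain B' where b: "Y = B' - {n}" "T G1 B' {}" "n \<notin> G1" unfolding nu0_def by blast
    have "pT c m T e X B' \<rho>" unfolding pT_def using h b nm by blast
    then have "nu0 n (pT c m T e) X Y \<rho>" unfolding nu0_def using b h nm cm by (auto simp: restr_def)
    then show ?thesis by (rule nuTI0)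
  next
    case 2
    then obtain p where "T G1 (insert n Y) ({} \<union> {p, dual p})" unfolding nuP_def by blast
    then have "{} \<union> {p, dual p} = {}" using ee h(4) by blast
    then show ?thesis by simp
  qed
qed

lemma swapN_sym': "swapN a b n = swapN b a n" by (auto simp: swapN_def)
lemma swapV_sym: "swapV a b v = swapV b a v" by (cases v) (auto simp: swapN_sym')
lemma swapI_sym: "swapI a b \<rho> = swapI b a \<rho>"
  unfolding swapI_def by (metis swapV_sym ext)
lemma swapM_sym: "swapM a b S = swapM b a S" by (induction S) (auto simp: swapN_sym' swapI_sym)
lemma swapS_sym: "swapS a b P = swapS b a P" by (induction P) (auto simp: swapN_sym' swapI_sym swapM_sym)

lemma image_fix: assumes "x \<notin> A" "z \<notin> A" shows "swapN x z ` A = A"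
proof -
  have "swapN x z ` A = (\<lambda>y. y) ` A" by (rule image_cong) (use assms in \<open>auto simp: swapN_def\<close>)
  then show ?thesis by simp
qed
lemma image_fixA: assumes "\<And>a. a \<in> \<tau> \<Longrightarrow> actname a \<noteq> x \<and> actname a \<noteq> z" shows "swA x z ` \<tau> = \<tau>"
proof -
  have "swA x z ` \<tau> = (\<lambda>y. y) ` \<tau>" by (rule image_cong) (use assms swA_id in auto)
  then show ?thesis by simp
qed

lemma fresh_nu: assumes z: "z \<notin> fnS (Nu x P)" and t: "tyS A B (Nu x P) \<tau>"
  shows "tyS A B (Nu z (swapS x z P)) \<tau>"
proof -
  have inv: "wf A B \<tau>" "A \<union> B \<subseteq> fnS (Nu x P)" using tyS_inv[OF t] by auto
  have x: "x \<notin> fnS (Nu x P)" by simp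
  have xa: "x \<notin> A" "z \<notin> A" "x \<notin> B" "z \<notin> B" using inv(2) x z by blast+
  have nt: "\<And>a. a \<in> \<tau> \<Longrightarrow> actname a \<noteq> x \<and> actname a \<noteq> z" using wf_names[OF inv(1)] xa by blast
  have "tyS (swapN x z ` A) (swapN x z ` B) (swapS x z (Nu x P)) (swA x z ` \<tau>)" by (rule tyS_sw[OF t])
  then show ?thesis using image_fix[OF xa(1,2)] image_fix[OF xa(3,4)] image_fixA[OF nt] by simp
qed

lemma fresh_eq: assumes z: "z \<notin> fnS (Nu x P)" shows "TS (Nu x P) = TS (Nu z (swapS x z P))"
proof (intro ext iffI)
  fix A B \<tau> assume "TS (Nu x P) A B \<tau>"
  then show "TS (Nu z (swapS x z P)) A B \<tau>" unfolding TS_def using fresh_nu[OF z] by blast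
next
  fix A B \<tau> assume a: "TS (Nu z (swapS x z P)) A B \<tau>"
  have x: "x \<notin> fnS (Nu z (swapS x z P))"
    using z by (auto simp: fnS_sw image_iff swapN_def split: if_splits)
  have "tyS A B (Nu x (swapS z x (swapS x z P))) \<tau>" using fresh_nu[OF x] a unfolding TS_def by blast
  then show "TS (Nu x P) A B \<tau>" unfolding TS_def by (simp add: swapS_sym[of z x])
qed

lemma alpha_TS: "alphaS P Q \<Longrightarrow> TS P = TS Q \<and> (actS P = {} \<longleftrightarrow> actS Q = {})"
proof (induction rule: alphaS.induct)
  case a_nil then show ?case by simp
next
  case (a_prot A \<rho>) then show ?case by simp
next
  case (a_cell P Q S) then show ?case by (simp add: TS_Cell)
next
  case (a_par P P' Q Q') then show ?case by (simp add: TS_SPar)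
next
  case (a_nu z x P y Q)
  have "TS (Nu x P) = TS (Nu z (swapS x z P))" by (rule fresh_eq[OF a_nu.hyps(1)])
  also have "\<dots> = TS (Nu z (swapS y z Q))" using a_nu.IH by (simp add: TS_Nu)
  also have "\<dots> = TS (Nu y Q)" by (rule fresh_eq[OF a_nu.hyps(2), symmetric])
  finally show ?case using a_nu.IH by (simp add: actS_sw)
next
  case (a_pinch P Q n) then show ?case by (simp add: TS_Pinch)
next
  case (a_fuse P Q n S) then show ?case by (simp add: TS_Fuse TS_Cell)
qed

lemma eqM_TM: "eqM S T \<Longrightarrow> TM S = TM T \<and> actM S = actM T"
proof (induction rule: eqM.induct)
  case (m_comm S T) then show ?case by (simp add: TM_MPar parT_comm Un_commute)
next
  case (m_assoc S T U) then show ?case by (simp add: TM_MPar parT_assoc WF_TM Un_assoc)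
next
  case (m_unit S) then show ?case by (simp add: TM_MPar TM_MNil parT_unit)
next
  case (m_par S S' T T') then show ?case by (simp add: TM_MPar)
next
  case (m_copinch S T n) then show ?case by (simp add: TM_CoPinch)
qed auto

lemma NF_TS: "n \<notin> fnS Q \<Longrightarrow> NF n (TS Q)"
  unfolding NF_def TS_def using tyS_inv wf_names by blast
lemma NF_TM: "n \<notin> fnM S \<Longrightarrow> NF n (TM S)"
  unfolding NF_def TM_def using tyM_inv wf_names by blast

lemma TS_empty: "TS P A B \<tau> \<Longrightarrow> actS P = {} \<Longrightarrow> \<tau> = {}"
  unfolding TS_def using tyS_inv by blast

lemma eqS_TS: "eqS P Q \<Longrightarrow> TS P = TS Q \<and> (actS P = {} \<longleftrightarrow> actS Q = {})"
proof (induction rule: eqS.induct)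
  case (s_alpha P Q) then show ?case by (rule alpha_TS)
next
  case (s_comm P Q) then show ?case by (auto simp: TS_SPar parT_comm)
next
  case (s_assoc P Q R) then show ?case by (auto simp: TS_SPar parT_assoc WF_TS)
next
  case (s_unit P) then show ?case by (simp add: TS_SPar TS_SNil parT_unit)
next
  case (s_nunu n m P) then show ?case by (simp add: TS_Nu nuT_nuT)
next
  case (s_nunil n) then show ?case by (simp add: TS_Nu TS_SNil nuT_E[symmetric])
next
  case (s_nupar n Q P) then show ?case by (auto simp: TS_Nu TS_SPar nuT_parT[OF NF_TS])
next
  case (s_nucell n S P) then show ?case by (auto simp: TS_Nu TS_Cell nuT_cellT[OF NF_TM])
next
  case (s_nupinch n m P)
  have "TS (Nu n (Pinch m P)) = nuT n (pT Ap m (TS P) (actS P = {}))" by (simp add: TS_Nu TS_Pinch)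
  also have "\<dots> = pT Ap m (nuT n (TS P)) (actS P = {})"
    by (rule nuT_pT; (use s_nupinch in simp)?; erule TS_empty; assumption)
  also have "\<dots> = TS (Pinch m (Nu n P))" by (simp add: TS_Nu TS_Pinch)
  finally show ?case by simp
next
  case (s_nufuse n m S P)
  have "TS (Nu n (Fuse m S P)) = nuT n (pT Af m (TS (Cell S P)) (actS (Cell S P) = {}))" by (simp add: TS_Nu TS_Fuse)
  also have "\<dots> = pT Af m (nuT n (TS (Cell S P))) (actS (Cell S P) = {})"
    apply (rule nuT_pT)
    using s_nufuse apply simp
     apply simp
    apply (erule TS_empty, assumption)
    done
  also have "nuT n (TS (Cell S P)) = TS (Cell S (Nu n P))"
    using s_nufuse by (simp add: TS_Nu TS_Cell nuT_cellT[OF NF_TM])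
  also have "pT Af m (TS (Cell S (Nu n P))) (actS (Cell S P) = {}) = TS (Fuse m S (Nu n P))"
    by (simp add: TS_Fuse)
  finally show ?case by simp
next
  case (s_par P P' Q Q') then show ?case by (simp add: TS_SPar)
next
  case (s_cell S T P Q) then show ?case using eqM_TM[OF s_cell.hyps(1)] by (simp add: TS_Cell)
next
  case (s_pinch P Q n) then show ?case by (simp add: TS_Pinch)
next
  case (s_fuse S P T Q n) then show ?case by (simp add: TS_Fuse)
qed auto

theorem mainTheorem4:
  fixes P Q :: "('pp, 'ap) sys" and S T :: "'ap mem"
  assumes "eqS P Q" and "eqM S T"
  shows "(\<forall>G1 G2 \<tau>. tyS G1 G2 P \<tau> \<longleftrightarrow> tyS G1 G2 Q \<tau>) \<and>
         (\<forall>D1 D2 \<sigma>. tyM D1 D2 S \<sigma> \<longleftrightarrow> tyM D1 D2 T \<sigma>)"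
proof -
  have "TS P = TS Q" using eqS_TS[OF assms(1)] by blast
  moreover have "TM S = TM T" using eqM_TM[OF assms(2)] by blast
  ultimately show ?thesis unfolding TS_def TM_def by (metis)
qed

end
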